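(* Let $\mathcal{H}_{A_1},\mathcal{H}_{A_2},\mathcal{H}_{B_1},\mathcal{H}_{B_2}$ be finite-dimensional Hilbert spaces with fixed reference bases of $\mathcal{H}_{A_1}$ and $\mathcal{H}_{A_2}$ (and the product basis on $\mathcal{H}_{A_1}\otimes\mathcal{H}_{A_2}$). For all states $\rho_{A_1B_1}$ and $\rho_{A_2B_2}$, $$C^{A_1A_2|B_1B_2}_f(\rho_{A_1B_1}\otimes\rho_{A_2B_2})=C^{A_1|B_1}_f(\rho_{A_1B_1})+C^{A_2|B_2}_f(\rho_{A_2B_2}).$$
   Context: $S$ is the von Neumann entropy. For a split $X|Y$ where $X$ has reference basis $\{|k\rangle_X\}$, $\Delta_X(\rho)=\sum_k(|k\rangle\langle k|_X\otimes I_Y)\rho(|k\rangle\langle k|_X\otimes I_Y)$, and the IQ coherence of formation is $C^{X|Y}_f(\rho_{XY})=\min\sum_ip_iS(\Delta_X(|\psi_i\rangle\langle\psi_i|_{XY}))$ over all pure-state decompositions $\rho_{XY}=\sum_ip_i|\psi_i\rangle\langle\psi_i|_{XY}$. *)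

theory Defs
  imports "Jordan_Normal_Form.Schur_Decomposition" "HOL-Computational_Algebra.Polynomial"
begin

(* A composite space H_X (x) H_Y with dim dX, dY is C^(dX*dY) with the product
   basis index  x*dY + y  (x < dX, y < dY);  |x> is the reference basis of H_X. *)

definition is_state :: "nat \<Rightarrow> complex mat \<Rightarrow> bool" where
  "is_state n \<rho> \<longleftrightarrow> \<rho> \<in> carrier_mat n n \<and> mat_adjoint \<rho> = \<rho>
     \<and> (\<forall>v \<in> carrier_vec n. 0 \<le> Re (conjugate v \<bullet> (\<rho> *\<^sub>v v)))
     \<and> (\<Sum>i<n. \<rho> $$ (i, i)) = 1"

(* von Neumann entropy S(rho) = - sum over eigenvalues (with multiplicity) of l log2 l,
   with the convention 0 log 0 = 0 (log 2 0 = 0 in Isabelle). *)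
definition vN_entropy :: "complex mat \<Rightarrow> real" where
  "vN_entropy \<rho> = - sum_mset (image_mset (\<lambda>l. Re l * log 2 (Re l)) (proots (char_poly \<rho>)))"

definition proj :: "nat \<Rightarrow> complex vec \<Rightarrow> complex mat" where
  "proj n \<psi> = mat n n (\<lambda>(i, j). \<psi> $ i * cnj (\<psi> $ j))"

definition dephase :: "nat \<Rightarrow> nat \<Rightarrow> complex mat \<Rightarrow> complex mat" where
  "dephase dX dY M = mat (dX * dY) (dX * dY)
     (\<lambda>(i, j). if i div dY = j div dY then M $$ (i, j) else 0)"

definition pure_decomp :: "nat \<Rightarrow> complex mat \<Rightarrow> nat \<Rightarrow> (nat \<Rightarrow> real) \<Rightarrow> (nat \<Rightarrow> complex vec) \<Rightarrow> bool" where
  "pure_decomp n \<rho> m p \<psi> \<longleftrightarrow>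
     (\<forall>k<m. 0 \<le> p k \<and> \<psi> k \<in> carrier_vec n \<and> (\<Sum>i<n. (cmod (\<psi> k $ i))\<^sup>2) = 1)
     \<and> (\<Sum>k<m. p k) = 1
     \<and> \<rho> = mat n n (\<lambda>(i, j). \<Sum>k<m. complex_of_real (p k) * (\<psi> k $ i * cnj (\<psi> k $ j)))"

definition coh_form :: "nat \<Rightarrow> nat \<Rightarrow> complex mat \<Rightarrow> real" where
  "coh_form dX dY \<rho> = Inf {(\<Sum>k<m. p k * vN_entropy (dephase dX dY (proj (dX * dY) (\<psi> k)))) | m p \<psi>.
        pure_decomp (dX * dY) \<rho> m p \<psi>}"

(* rho1 on A1B1, rho2 on A2B2  ==>  rho1 (x) rho2 as an operator on (A1A2)(B1B2),
   with product basis |a1 a2> on A1A2 and |b1 b2> on B1B2. *)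
definition tensor_reorder :: "nat \<Rightarrow> nat \<Rightarrow> nat \<Rightarrow> nat \<Rightarrow> complex mat \<Rightarrow> complex mat \<Rightarrow> complex mat" where
  "tensor_reorder dA1 dB1 dA2 dB2 \<rho>1 \<rho>2 =
     (let dX = dA1 * dA2; dY = dB1 * dB2;
          a1 = (\<lambda>i. (i div dY) div dA2); a2 = (\<lambda>i. (i div dY) mod dA2);
          b1 = (\<lambda>i. (i mod dY) div dB2); b2 = (\<lambda>i. (i mod dY) mod dB2)
      in mat (dX * dY) (dX * dY) (\<lambda>(i, j).
           \<rho>1 $$ (a1 i * dB1 + b1 i, a1 j * dB1 + b1 j) * \<rho>2 $$ (a2 i * dB2 + b2 i, a2 j * dB2 + b2 j)))"

end

theory Submission
  imports Defs
begin


definition mtr :: "complex mat \<Rightarrow> complex" where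
  "mtr M = (\<Sum>i<dim_row M. M $$ (i,i))"

lemma mtr_comm:
  assumes A: "A \<in> carrier_mat n n" and B: "B \<in> carrier_mat n n"
  shows "mtr (A*B) = mtr (B*A)"
proof -
  have "mtr (A*B) = (\<Sum>i<n. \<Sum>j<n. A$$(i,j) * B$$(j,i))"
    using A B by (simp add: mtr_def scalar_prod_def lessThan_atLeast0)
  also have "\<dots> = (\<Sum>j<n. \<Sum>i<n. B$$(j,i) * A$$(i,j))"
    by (subst sum.swap) (simp add: mult.commute)
  also have "\<dots> = mtr (B*A)"
    using A B by (simp add: mtr_def scalar_prod_def lessThan_atLeast0)
  finally show ?thesis .
qed

definition R1 :: "nat \<Rightarrow> (nat \<Rightarrow> complex) \<Rightarrow> complex mat" where
  "R1 d g = mat d d (\<lambda>(i,j). g i * cnj (g j))"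

lemma proots_linprod: "proots (\<Prod>a\<leftarrow>as. [:-a,1:]) = mset (as::complex list)"
proof (induction as)
  case Nil then show ?case by simp
next
  case (Cons a as)
  have nz: "(\<Prod>a\<leftarrow>as. [:-a,1::complex:]) \<noteq> 0"
    by (auto simp: prod_list_zero_iff)
  define P where "P = (\<Prod>a\<leftarrow>as. [:-a,1::complex:])"
  have e: "(\<Prod>a\<leftarrow>a#as. [:-a,1:]) = [:-a,1:] * P" by (simp add: P_def)
  have "proots ([:-a,1:] * P) = proots [:-a,1:] + proots P" by (rule proots_mult) (auto simp: nz P_def)
  then have "proots (\<Prod>a\<leftarrow>a#as. [:-a,1:]) = {#a#} + mset as" using Cons by (simp only: e P_def[symmetric]) simp
  then show ?case by simp
qed

lemma R1_eig:
  assumes root: "poly (char_poly (R1 d g)) a = 0" and a0: "a \<noteq> 0"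
  shows "a = (\<Sum>i<d. g i * cnj (g i))"
proof -
  have C: "R1 d g \<in> carrier_mat d d" by (simp add: R1_def)
  from eigenvalue_root_char_poly[OF C] root obtain v where ev: "eigenvector (R1 d g) v a"
    unfolding eigenvalue_def by auto
  hence v: "v \<in> carrier_vec d" "v \<noteq> 0\<^sub>v d" "R1 d g *\<^sub>v v = a \<cdot>\<^sub>v v"
    unfolding eigenvector_def R1_def by auto
  define s where "s = (\<Sum>j<d. cnj (g j) * v $ j)"
  have comp: "v $ i = g i * s / a" if i: "i < d" for i
  proof -
    have "(R1 d g *\<^sub>v v) $ i = g i * s" using i v(1)
      by (simp add: R1_def scalar_prod_def s_def sum_distrib_left ac_simps lessThan_atLeast0)
    moreover have "(a \<cdot>\<^sub>v v) $ i = a * v $ i" using i v(1) by simp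
    ultimately show ?thesis using v(3) a0 by (simp add: field_simps)
  qed
  have s0: "s \<noteq> 0"
  proof
    assume "s = 0"
    hence "v = 0\<^sub>v d" using comp v(1) by (intro eq_vecI) auto
    with v(2) show False by simp
  qed
  have "s = (\<Sum>j<d. cnj (g j) * v $ j)" by (simp add: s_def)
  also have "\<dots> = (\<Sum>j<d. cnj (g j) * (g j * s / a))"
    by (rule sum.cong[OF refl]) (simp add: comp)
  also have "\<dots> = s / a * (\<Sum>j<d. g j * cnj (g j))"
    by (simp add: sum_distrib_left ac_simps)
  finally have "s * a = s * (\<Sum>j<d. g j * cnj (g j))" using a0 by (simp add: field_simps)
  with s0 show ?thesis by simp
qed

lemma R1_fact:
  obtains as where "char_poly (R1 d g) = (\<Prod>a\<leftarrow>as. [:-a,1:])"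
    "sum_list as = (\<Sum>i<d. g i * cnj (g i))"
proof -
  let ?A = "R1 d g"
  have C: "?A \<in> carrier_mat d d" by (simp add: R1_def)
  from char_poly_factorized[OF C] obtain as where cp: "char_poly ?A = (\<Prod>a\<leftarrow>as. [:-a,1:])" by auto
  obtain B P Q where sd: "schur_decomposition ?A as = (B,P,Q)" by (cases "schur_decomposition ?A as") auto
  from schur_decomposition[OF C cp sd] have sim: "similar_mat_wit ?A B P Q" and dg: "diag_mat B = as"
    by auto
  from sim C have Bc: "B \<in> carrier_mat d d" and Pc: "P \<in> carrier_mat d d" and Qc: "Q \<in> carrier_mat d d"
    and QP: "Q * P = 1\<^sub>m d" and eq: "?A = P * B * Q"
    unfolding similar_mat_wit_def Let_def by auto
  have "mtr ?A = mtr (P * (B * Q))" using eq Pc Bc Qc by (simp add: assoc_mult_mat)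
  also have "\<dots> = mtr ((B * Q) * P)" using Pc Bc Qc by (intro mtr_comm) auto
  also have "(B * Q) * P = B" using Pc Bc Qc QP by (simp add: assoc_mult_mat)
  finally have tr: "mtr ?A = mtr B" .
  have "mtr B = sum_list as" unfolding dg[symmetric] diag_mat_def mtr_def
    by (simp add: sum_set_upt_conv_sum_list_nat[symmetric] lessThan_atLeast0)
  moreover have "mtr ?A = (\<Sum>i<d. g i * cnj (g i))" by (simp add: mtr_def R1_def)
  ultimately show ?thesis using that cp tr by metis
qed

lemma two_vals_aux:
  fixes as :: "complex list" and h :: "complex \<Rightarrow> real"
  assumes "\<forall>a\<in>set as. a = 0 \<or> a = c" "h 0 = 0"
  shows "sum_list (map h as) = real (count_list as c) * h c \<and> sum_list as = of_nat (count_list as c) * c"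
  using assms by (induction as) (auto simp: algebra_simps)

lemma two_vals:
  fixes as :: "complex list" and h :: "complex \<Rightarrow> real"
  assumes "\<forall>a\<in>set as. a = 0 \<or> a = c" "h 0 = 0" "sum_list as = c"
  shows "sum_list (map h as) = h c"
proof (cases "c = 0")
  case True
  then have "\<forall>a\<in>set as. h a = 0" using assms by auto
  then have "sum_list (map h as) = 0" by (induction as) auto
  then show ?thesis using True assms by simp
next
  case False
  from two_vals_aux[of as c h] assms have
    "sum_list (map h as) = real (count_list as c) * h c" "c = of_nat (count_list as c) * c" by auto
  from this(2) False have "count_list as c = 1"
    by (metis mult_cancel_right1 of_nat_eq_1_iff)
  then show ?thesis using \<open>sum_list (map h as) = _\<close> by simp
qed

definition ent :: "real \<Rightarrow> real" where "ent t = t * log 2 t"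

definition hh :: "complex \<Rightarrow> real" where "hh l = Re l * log 2 (Re l)"

lemma R1_ent:
  "sum_mset (image_mset hh (proots (char_poly (R1 d g)))) = ent (\<Sum>i<d. (cmod (g i))\<^sup>2)"
proof -
  obtain as where cp: "char_poly (R1 d g) = (\<Prod>a\<leftarrow>as. [:-a,1:])"
    and sm: "sum_list as = (\<Sum>i<d. g i * cnj (g i))" by (rule R1_fact)
  let ?c = "(\<Sum>i<d. g i * cnj (g i))"
  have vals: "\<forall>a\<in>set as. a = 0 \<or> a = ?c"
  proof
    fix a assume "a \<in> set as"
    then have "poly (char_poly (R1 d g)) a = 0" unfolding cp
      by (induction as) (auto simp: poly_prod_list)
    then show "a = 0 \<or> a = ?c" using R1_eig by blast
  qed
  have "sum_mset (image_mset hh (proots (char_poly (R1 d g)))) = sum_list (map hh as)"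
    unfolding cp proots_linprod by (simp add: sum_mset_sum_list[symmetric])
  also have "\<dots> = hh ?c" by (rule two_vals[OF vals]) (auto simp: hh_def sm)
  also have "?c = of_real (\<Sum>i<d. (cmod (g i))\<^sup>2)" unfolding of_real_sum complex_norm_square by simp
  also have "hh \<dots> = ent (\<Sum>i<d. (cmod (g i))\<^sup>2)" by (simp add: hh_def ent_def)
  finally show ?thesis .
qed


definition BD :: "nat \<Rightarrow> nat \<Rightarrow> (nat \<Rightarrow> complex) \<Rightarrow> complex mat" where
  "BD n d f = mat (n*d) (n*d) (\<lambda>(i,j). if i div d = j div d then f i * cnj (f j) else 0)"

lemma div_block: assumes "n*d \<le> j" "j < n*d + d" shows "j div d = (n::nat)"
proof -
  obtain r where r: "j = n*d + r" "r < d" using assms by (metis add_less_cancel_left le_Suc_ex)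
  then show ?thesis by simp
qed

lemma BD_Suc:
  "BD (Suc n) d f = four_block_mat (BD n d f) (0\<^sub>m (n*d) d) (0\<^sub>m d (n*d)) (R1 d (\<lambda>i. f (n*d+i)))"
proof (rule eq_matI)
  fix i j assume i: "i < dim_row (four_block_mat (BD n d f) (0\<^sub>m (n*d) d) (0\<^sub>m d (n*d)) (R1 d (\<lambda>i. f (n*d+i))))"
    and j: "j < dim_col (four_block_mat (BD n d f) (0\<^sub>m (n*d) d) (0\<^sub>m d (n*d)) (R1 d (\<lambda>i. f (n*d+i))))"
  have i': "i < n*d + d" and j': "j < n*d + d" using i j by (auto simp: BD_def R1_def)
  have d0: "0 < d" using i' by (cases d) auto
  show "BD (Suc n) d f $$ (i, j) = four_block_mat (BD n d f) (0\<^sub>m (n*d) d) (0\<^sub>m d (n*d)) (R1 d (\<lambda>i. f (n*d+i))) $$ (i, j)"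
  proof (cases "i < n*d")
    case True note iT = this
    then have idiv: "i div d < n" by (metis less_mult_imp_div_less)
    show ?thesis
    proof (cases "j < n*d")
      case True
      then show ?thesis using iT i' j' by (simp add: BD_def R1_def algebra_simps)
    next
      case False
      then have "j div d = n" using j' div_block by auto
      then show ?thesis using iT False i' j' idiv by (simp add: BD_def R1_def algebra_simps)
    qed
  next
    case False note iF = this
    then have idiv: "i div d = n" using i' div_block by auto
    show ?thesis
    proof (cases "j < n*d")
      case True
      then have "j div d < n" by (metis less_mult_imp_div_less)
      then show ?thesis using True iF i' j' idiv by (simp add: BD_def R1_def algebra_simps)
    next
      case False
      then have "j div d = n" using j' div_block by auto
      then show ?thesis using iF False i' j' idiv by (simp add: BD_def R1_def algebra_simps)
    qed
  qed
qed (auto simp: BD_def R1_def algebra_simps)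

lemma char_poly_nz: assumes "A \<in> carrier_mat n n" shows "char_poly (A :: complex mat) \<noteq> 0"
  using degree_monic_char_poly[OF assms] by auto

lemma BD_ent:
  "sum_mset (image_mset hh (proots (char_poly (BD n d f)))) =
     (\<Sum>x<n. ent (\<Sum>y<d. (cmod (f (x*d+y)))\<^sup>2))"
proof (induction n)
  case 0
  have C: "BD 0 d f \<in> carrier_mat 0 0" by (simp add: BD_def)
  from char_poly_factorized[OF C] obtain as where "char_poly (BD 0 d f) = (\<Prod>a\<leftarrow>as. [:-a,1:])" "length as = 0" by auto
  then have "char_poly (BD 0 d f) = 1" by simp
  then show ?case by simp
next
  case (Suc n)
  have B: "BD n d f \<in> carrier_mat (n*d) (n*d)" by (simp add: BD_def)
  have D: "R1 d (\<lambda>i. f (n*d+i)) \<in> carrier_mat d d" by (simp add: R1_def)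
  have cp: "char_poly (BD (Suc n) d f) = char_poly (BD n d f) * char_poly (R1 d (\<lambda>i. f (n*d+i)))"
    unfolding BD_Suc
    by (rule char_poly_0_block[OF refl _ _ B _ D]) (use char_poly_factorized B D in auto)
  have "proots (char_poly (BD (Suc n) d f)) = proots (char_poly (BD n d f)) + proots (char_poly (R1 d (\<lambda>i. f (n*d+i))))"
    unfolding cp by (rule proots_mult) (use char_poly_nz B D in auto)
  then show ?case using Suc R1_ent[of d "\<lambda>i. f (n*d+i)"] by (simp add: algebra_simps)
qed

definition qd :: "nat \<Rightarrow> (nat \<Rightarrow> complex) \<Rightarrow> nat \<Rightarrow> real" where
  "qd dY f x = (\<Sum>y<dY. (cmod (f (x*dY+y)))\<^sup>2)"

lemma dephase_proj:
  assumes "\<psi> \<in> carrier_vec (dX*dY)"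
  shows "dephase dX dY (proj (dX*dY) \<psi>) = BD dX dY (\<lambda>i. \<psi> $ i)"
  unfolding dephase_def proj_def BD_def by (rule eq_matI) auto

lemma vN_dephase:
  assumes "\<psi> \<in> carrier_vec (dX*dY)"
  shows "vN_entropy (dephase dX dY (proj (dX*dY) \<psi>)) = - (\<Sum>x<dX. ent (qd dY (\<lambda>i. \<psi> $ i) x))"
proof -
  have "vN_entropy (dephase dX dY (proj (dX*dY) \<psi>)) = - sum_mset (image_mset hh (proots (char_poly (BD dX dY (\<lambda>i. \<psi> $ i)))))"
    unfolding dephase_proj[OF assms] vN_entropy_def hh_def by simp
  then show ?thesis using BD_ent unfolding qd_def by simp
qed


lemma ent_0[simp]: "ent 0 = 0" by (simp add: ent_def)

lemma ent_nonpos: assumes "0 \<le> t" "t \<le> 1" shows "ent t \<le> 0"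
proof (cases "t = 0")
  case False
  then have "log 2 t \<le> 0" using assms by simp
  then show ?thesis using assms by (simp add: ent_def mult_nonneg_nonpos)
qed simp

lemma ent_mult: assumes "0 \<le> x" "0 \<le> y" shows "ent (x*y) = x * ent y + y * ent x"
proof (cases "x = 0 \<or> y = 0")
  case True then show ?thesis by auto
next
  case False
  then have "x > 0" "y > 0" using assms by auto
  then show ?thesis by (simp add: ent_def log_mult algebra_simps)
qed

lemma ln_term:
  fixes c b C B :: real
  assumes "0 < c" "0 < b" "0 < C" "0 < B"
  shows "c - b*C/B \<le> c * ln c - c * ln b - c * ln C + c * ln B"
proof -
  have y: "0 < c*B/(b*C)" using assms by simp
  have "ln (1 / (c*B/(b*C))) \<le> 1 / (c*B/(b*C)) - 1" by (intro ln_le_minus_one) (use assms in simp)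
  then have "1 - b*C/(c*B) \<le> ln (c*B/(b*C))" using y assms by (simp add: ln_div)
  also have "ln (c*B/(b*C)) = ln c + ln B - ln b - ln C" using assms by (simp add: ln_div ln_mult)
  finally have "c * (1 - b*C/(c*B)) \<le> c * (ln c + ln B - ln b - ln C)"
    using assms by (intro mult_left_mono) auto
  then show ?thesis using assms by (simp add: algebra_simps)
qed

lemma log_sum_ln:
  fixes c b :: "'j \<Rightarrow> real"
  assumes fin: "finite J" and c0: "\<And>j. j \<in> J \<Longrightarrow> 0 \<le> c j" and cb: "\<And>j. j \<in> J \<Longrightarrow> c j \<le> b j"
  shows "(\<Sum>j\<in>J. c j) * ln (\<Sum>j\<in>J. c j) - (\<Sum>j\<in>J. c j) * ln (\<Sum>j\<in>J. b j)
         \<le> (\<Sum>j\<in>J. c j * ln (c j) - c j * ln (b j))"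
proof -
  let ?C = "\<Sum>j\<in>J. c j" and ?B = "\<Sum>j\<in>J. b j"
  show ?thesis
  proof (cases "?C = 0")
    case True
    then have "\<forall>j\<in>J. c j = 0" using sum_nonneg_eq_0_iff[OF fin] c0 by blast
    then show ?thesis using True by simp
  next
    case False
    then have Cp: "0 < ?C" using sum_nonneg[of J c] c0 by fastforce
    have "?C \<le> ?B" using cb by (intro sum_mono) auto
    then have Bp: "0 < ?B" using Cp by simp
    have trm: "c j - b j * ?C / ?B \<le> c j * ln (c j) - c j * ln (b j) - c j * ln ?C + c j * ln ?B"
      if j: "j \<in> J" for j
    proof (cases "c j = 0")
      case True
      have "0 \<le> b j" using c0[OF j] cb[OF j] by simp
      then show ?thesis using True Cp Bp by simp
    next
      case False
      then have "0 < c j" using c0[OF j] by simp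
      moreover then have "0 < b j" using cb[OF j] by simp
      ultimately show ?thesis using ln_term Cp Bp by blast
    qed
    have "(\<Sum>j\<in>J. c j - b j * ?C / ?B) = ?C - ?B * ?C / ?B"
      by (simp add: sum_subtractf sum_divide_distrib[symmetric] sum_distrib_right[symmetric])
    also have "\<dots> = 0" using Bp by simp
    finally have z: "(\<Sum>j\<in>J. c j - b j * ?C / ?B) = 0" .
    have "0 \<le> (\<Sum>j\<in>J. c j * ln (c j) - c j * ln (b j) - c j * ln ?C + c j * ln ?B)"
      using sum_mono[of J "\<lambda>j. c j - b j * ?C / ?B", OF trm] z by simp
    also have "\<dots> = (\<Sum>j\<in>J. c j * ln (c j) - c j * ln (b j)) - ?C * ln ?C + ?C * ln ?B"
      by (simp add: sum.distrib sum_subtractf sum_distrib_right[symmetric])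
    finally show ?thesis by simp
  qed
qed

lemma log_sum_ent:
  fixes c b :: "'j \<Rightarrow> real"
  assumes fin: "finite J" and c0: "\<And>j. j \<in> J \<Longrightarrow> 0 \<le> c j" and cb: "\<And>j. j \<in> J \<Longrightarrow> c j \<le> b j"
  shows "ent (\<Sum>j\<in>J. c j) - (\<Sum>j\<in>J. c j) * log 2 (\<Sum>j\<in>J. b j)
         \<le> (\<Sum>j\<in>J. ent (c j) - c j * log 2 (b j))"
proof -
  have l2: "0 < ln (2::real)" by simp
  let ?C = "\<Sum>j\<in>J. c j" and ?B = "\<Sum>j\<in>J. b j"
  have "(?C * ln ?C - ?C * ln ?B) / ln 2 \<le> (\<Sum>j\<in>J. c j * ln (c j) - c j * ln (b j)) / ln 2"
    by (rule divide_right_mono[OF log_sum_ln[OF assms]]) (use l2 in auto)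
  then show ?thesis
    by (simp add: ent_def log_def sum_divide_distrib diff_divide_distrib)
qed

lemma superadd:
  fixes c :: "'j \<Rightarrow> 'a \<Rightarrow> real"
  assumes fJ: "finite J" and fA: "finite A" and c0: "\<And>j a. j \<in> J \<Longrightarrow> a \<in> A \<Longrightarrow> 0 \<le> c j a"
  shows "(\<Sum>j\<in>J. ent (\<Sum>a\<in>A. c j a) - (\<Sum>a\<in>A. ent (c j a)))
         \<le> ent (\<Sum>j\<in>J. \<Sum>a\<in>A. c j a) - (\<Sum>a\<in>A. ent (\<Sum>j\<in>J. c j a))"
proof -
  define M where "M j = (\<Sum>a\<in>A. c j a)" for j
  let ?T = "\<Sum>j\<in>J. M j"
  have cM: "c j a \<le> M j" if "j \<in> J" "a \<in> A" for j a
    unfolding M_def using c0 that fA by (intro member_le_sum) auto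
  have ls: "ent (\<Sum>j\<in>J. c j a) - (\<Sum>j\<in>J. c j a) * log 2 ?T \<le> (\<Sum>j\<in>J. ent (c j a) - c j a * log 2 (M j))"
    if a: "a \<in> A" for a
    using log_sum_ent[OF fJ, of "\<lambda>j. c j a" M] c0 cM a by auto
  have S: "(\<Sum>a\<in>A. ent (\<Sum>j\<in>J. c j a) - (\<Sum>j\<in>J. c j a) * log 2 ?T)
       \<le> (\<Sum>a\<in>A. \<Sum>j\<in>J. ent (c j a) - c j a * log 2 (M j))"
    using ls by (rule sum_mono)
  have e1: "(\<Sum>a\<in>A. (\<Sum>j\<in>J. c j a) * log 2 ?T) = ent ?T"
    unfolding ent_def M_def by (simp add: sum_distrib_right[symmetric] sum.swap[of _ A J])
  have e2: "(\<Sum>a\<in>A. \<Sum>j\<in>J. c j a * log 2 (M j)) = (\<Sum>j\<in>J. ent (M j))"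
    unfolding ent_def by (subst sum.swap) (simp add: sum_distrib_right[symmetric] M_def)
  have "(\<Sum>a\<in>A. ent (\<Sum>j\<in>J. c j a)) - ent ?T \<le> (\<Sum>a\<in>A. \<Sum>j\<in>J. ent (c j a)) - (\<Sum>j\<in>J. ent (M j))"
    using S e1 e2 by (simp add: sum_subtractf)
  then show ?thesis unfolding M_def
    by (simp add: sum_subtractf sum.swap[of _ A J] algebra_simps)
qed


definition Qf :: "nat \<Rightarrow> (nat \<Rightarrow> nat \<Rightarrow> complex) \<Rightarrow> (nat \<Rightarrow> complex) \<Rightarrow> complex" where
  "Qf n G v = (\<Sum>i<n. \<Sum>j<n. cnj (v i) * G i j * v j)"

definition psdf :: "nat \<Rightarrow> (nat \<Rightarrow> nat \<Rightarrow> complex) \<Rightarrow> bool" where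
  "psdf n G \<longleftrightarrow> (\<forall>v. 0 \<le> Re (Qf n G v))"

definition hermf :: "nat \<Rightarrow> (nat \<Rightarrow> nat \<Rightarrow> complex) \<Rightarrow> bool" where
  "hermf n G \<longleftrightarrow> (\<forall>i<n. \<forall>j<n. G j i = cnj (G i j))"

lemma Q_update:
  assumes k: "k < n"
  shows "Qf n G (\<lambda>i. v i + (if i = k then t else 0)) =
    Qf n G v + cnj t * (\<Sum>j<n. G k j * v j) + t * (\<Sum>i<n. cnj (v i) * G i k) + cnj t * t * G k k"
proof -
  have "Qf n G (\<lambda>i. v i + (if i = k then t else 0)) =
     (\<Sum>i<n. \<Sum>j<n. cnj (v i) * G i j * v j) + (\<Sum>i<n. \<Sum>j<n. cnj (v i) * G i j * (if j = k then t else 0))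
     + (\<Sum>i<n. \<Sum>j<n. cnj (if i = k then t else 0) * G i j * v j)
     + (\<Sum>i<n. \<Sum>j<n. cnj (if i = k then t else 0) * G i j * (if j = k then t else 0))"
    unfolding Qf_def by (simp add: distrib_left distrib_right sum.distrib)
  also have "(\<Sum>i<n. \<Sum>j<n. cnj (v i) * G i j * (if j = k then t else 0)) = t * (\<Sum>i<n. cnj (v i) * G i k)"
    using k by (simp add: if_distrib[of "\<lambda>x. _ * x"] sum.delta sum_distrib_left ac_simps cong: if_cong)
  also have "(\<Sum>i<n. \<Sum>j<n. cnj (if i = k then t else 0) * G i j * v j) = cnj t * (\<Sum>j<n. G k j * v j)"
  proof -
    have "(\<Sum>i<n. \<Sum>j<n. cnj (if i = k then t else 0) * G i j * v j) = (\<Sum>i<n. if i = k then (\<Sum>j<n. cnj t * G k j * v j) else 0)"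
      by (rule sum.cong) auto
    then show ?thesis using k by (simp add: sum_distrib_left ac_simps)
  qed
  also have "(\<Sum>i<n. \<Sum>j<n. cnj (if i = k then t else 0) * G i j * (if j = k then t else 0)) = cnj t * t * G k k"
  proof -
    have "(\<Sum>i<n. \<Sum>j<n. cnj (if i = k then t else 0) * G i j * (if j = k then t else 0)) = (\<Sum>i<n. if i = k then cnj t * G k k * t else 0)"
      using k by (intro sum.cong) (auto simp: if_distrib[of "\<lambda>x. _ * x"] sum.delta cong: if_cong)
    then show ?thesis using k by simp
  qed
  finally show ?thesis unfolding Qf_def by (simp add: algebra_simps)
qed

lemma Q_unit: assumes "j < n" shows "Qf n G (\<lambda>i. if i = j then 1 else 0) = G j j"
proof -
  have "Qf n G (\<lambda>i. if i = j then 1 else 0) = (\<Sum>i<n. if i = j then G j j else 0)"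
    unfolding Qf_def using assms by (intro sum.cong) (auto simp: if_distrib[of "\<lambda>x. _ * x"] sum.delta cong: if_cong)
  then show ?thesis using assms by simp
qed

lemma zero_diag:
  assumes h: "hermf n G" and p: "psdf n G" and k: "k < n" and j: "j < n" and z: "G k k = 0"
  shows "G k j = 0"
proof (rule ccontr)
  assume nz: "G k j \<noteq> 0"
  let ?g = "G k j"
  define s where "s = (\<bar>Re (G j j)\<bar> + 1) / (cmod ?g)\<^sup>2"
  define t where "t = - complex_of_real s * ?g"
  let ?v = "\<lambda>i. (if i = j then 1 else 0) :: complex"
  have s1: "(\<Sum>j'<n. G k j' * ?v j') = ?g" using j by (simp add: if_distrib[of "\<lambda>x. _ * x"] sum.delta cong: if_cong)
  have "(\<Sum>i<n. cnj (?v i) * G i k) = G j k" using j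
    by (simp add: if_distrib[of cnj] if_distrib[of "\<lambda>x. x * _"] sum.delta cong: if_cong)
  also have "G j k = cnj ?g" using h j k unfolding hermf_def by blast
  finally have s2: "(\<Sum>i<n. cnj (?v i) * G i k) = cnj ?g" .
  have "Qf n G (\<lambda>i. ?v i + (if i = k then t else 0)) = G j j + cnj t * ?g + t * cnj ?g"
    using Q_update[OF k, of G ?v t] s1 s2 Q_unit[OF j] z by simp
  also have "cnj t * ?g = - of_real s * (?g * cnj ?g)" by (simp add: t_def)
  also have "t * cnj ?g = - of_real s * (?g * cnj ?g)" by (simp add: t_def)
  finally have eq1: "Re (Qf n G (\<lambda>i. ?v i + (if i = k then t else 0))) = Re (G j j) - 2 * (s * (cmod ?g)\<^sup>2)"
    by (simp add: complex_norm_square[symmetric])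
  have sc: "s * (cmod ?g)\<^sup>2 = \<bar>Re (G j j)\<bar> + 1" using nz by (simp add: s_def)
  from eq1 sc have eq2: "Re (Qf n G (\<lambda>i. ?v i + (if i = k then t else 0))) = Re (G j j) - 2 * (\<bar>Re (G j j)\<bar> + 1)"
    by simp
  have nn: "0 \<le> Re (Qf n G (\<lambda>i. ?v i + (if i = k then t else 0)))" using p unfolding psdf_def by blast
  have "0 \<le> Re (G j j) - 2 * (\<bar>Re (G j j)\<bar> + 1)" using nn unfolding eq2 .
  then show False by (smt (verit) abs_ge_self abs_ge_zero)
qed

lemma Qf_cong: assumes "\<And>i j. i < n \<Longrightarrow> j < n \<Longrightarrow> G i j = H i j" shows "Qf n G v = Qf n H v"
  unfolding Qf_def using assms by (intro sum.cong refl) auto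

lemma elim_step:
  assumes h: "hermf n G" and p: "psdf n G" and k: "k < n"
    and zr: "\<forall>i<k. \<forall>j<n. G i j = 0 \<and> G j i = 0"
  shows "\<exists>u. hermf n (\<lambda>i j. G i j - u i * cnj (u j)) \<and> psdf n (\<lambda>i j. G i j - u i * cnj (u j))
     \<and> (\<forall>i<Suc k. \<forall>j<n. G i j - u i * cnj (u j) = 0 \<and> G j i - u j * cnj (u i) = 0)"
proof (cases "G k k = 0")
  case True
  have zk: "G k j = 0 \<and> G j k = 0" if "j < n" for j
  proof -
    have "G k j = 0" using zero_diag[OF h p k that True] .
    moreover have "G j k = cnj (G k j)" using h k that unfolding hermf_def by blast
    ultimately show ?thesis by simp
  qed
  show ?thesis
    by (rule exI[of _ "\<lambda>_. 0"]) (use h p zr zk in \<open>auto simp: less_Suc_eq\<close>)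
next
  case False
  let ?a = "G k k"
  have ca: "cnj ?a = ?a" using h k unfolding hermf_def by (metis complex_cnj_cnj)
  have "0 \<le> Re (Qf n G (\<lambda>i. if i = k then 1 else 0))" using p unfolding psdf_def by blast
  then have ra: "0 \<le> Re ?a" using Q_unit[OF k] by simp
  have ia: "Im ?a = 0" using ca by (metis cnj.sel(2) equal_neg_zero)
  have aof: "?a = of_real (Re ?a)" using ia by (simp add: complex_eq_iff)
  have rap: "0 < Re ?a" using ra False aof by (metis less_eq_real_def of_real_0)
  define r where "r = sqrt (Re ?a)"
  have rr: "complex_of_real r * complex_of_real r = ?a"
  proof -
    have rr0: "r * r = Re ?a" using rap unfolding r_def by simp
    have "complex_of_real r * complex_of_real r = complex_of_real (r * r)" by simp
    also have "\<dots> = complex_of_real (Re ?a)" using rr0 by simp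
    also have "\<dots> = ?a" using aof[symmetric] .
    finally show ?thesis .
  qed
  have rnz: "complex_of_real r \<noteq> 0" using rr False by auto
  define u where "u i = G i k / of_real r" for i
  have uu: "u i * cnj (u j) = G i k * G k j / ?a" if "j < n" for i j
  proof -
    have "G k j = cnj (G j k)" using h k that unfolding hermf_def by blast
    then have "cnj (G j k) = G k j" by simp
    then show ?thesis unfolding u_def using rr by (simp add: field_simps)
  qed
  define G' where "G' i j = G i j - G i k * G k j / ?a" for i j
  have G'eq: "G i j - u i * cnj (u j) = G' i j" if "j < n" for i j using uu[OF that] by (simp add: G'_def)
  have herm': "hermf n G'"
    unfolding hermf_def
  proof (intro allI impI)
    fix i j assume i: "i < n" and j: "j < n"
    have "G j i = cnj (G i j)" "G k i = cnj (G i k)" "G j k = cnj (G k j)" using h i j k unfolding hermf_def by blast+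
    then show "G' j i = cnj (G' i j)" unfolding G'_def using ca by (simp add: ac_simps)
  qed
  have psd': "psdf n G'"
    unfolding psdf_def
  proof
    fix v
    define b where "b = (\<Sum>j<n. G k j * v j)"
    have cb: "(\<Sum>i<n. cnj (v i) * G i k) = cnj b"
    proof -
      have "(\<Sum>i<n. cnj (v i) * G i k) = (\<Sum>i<n. cnj (G k i * v i))"
      proof (rule sum.cong[OF refl])
        fix i assume "i \<in> {..<n}"
        then have "G i k = cnj (G k i)" using h k unfolding hermf_def by blast
        then show "cnj (v i) * G i k = cnj (G k i * v i)" by simp
      qed
      then show ?thesis unfolding b_def by simp
    qed
    have "Qf n G' v = (\<Sum>i<n. \<Sum>j<n. cnj (v i) * G i j * v j - (cnj (v i) * G i k) * (G k j * v j) / ?a)"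
      unfolding Qf_def G'_def by (intro sum.cong refl) (simp add: algebra_simps)
    also have "\<dots> = Qf n G v - (\<Sum>i<n. \<Sum>j<n. (cnj (v i) * G i k) * (G k j * v j)) / ?a"
      unfolding Qf_def by (simp only: sum_subtractf sum_divide_distrib)
    also have "(\<Sum>i<n. \<Sum>j<n. (cnj (v i) * G i k) * (G k j * v j)) = (\<Sum>i<n. cnj (v i) * G i k) * (\<Sum>j<n. G k j * v j)"
      by (rule sum_product[symmetric])
    finally have "Qf n G' v = Qf n G v - (\<Sum>i<n. cnj (v i) * G i k) * (\<Sum>j<n. G k j * v j) / ?a" .
    also have "\<dots> = Qf n G v - cnj b * b / ?a" unfolding cb b_def ..
    finally have e1: "Qf n G' v = Qf n G v - cnj b * b / ?a" .
    define t where "t = - b / ?a"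
    have "Qf n G (\<lambda>i. v i + (if i = k then t else 0)) = Qf n G v + cnj t * b + t * cnj b + cnj t * t * ?a"
      using Q_update[OF k, of G v t] cb unfolding b_def by simp
    also have "\<dots> = Qf n G v - cnj b * b / ?a"
      unfolding t_def using ca False by (simp add: field_simps)
    finally have "Qf n G' v = Qf n G (\<lambda>i. v i + (if i = k then t else 0))" using e1 by simp
    then show "0 \<le> Re (Qf n G' v)" using p unfolding psdf_def by simp
  qed
  have zr': "\<forall>i<Suc k. \<forall>j<n. G' i j = 0 \<and> G' j i = 0"
  proof (intro allI impI)
    fix i j assume i: "i < Suc k" and j: "j < n"
    show "G' i j = 0 \<and> G' j i = 0"
    proof (cases "i = k")
      case True
      then show ?thesis using False unfolding G'_def by simp
    next
      case False
      then have "i < k" using i by simp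
      then have "G i k = 0" "G k i = 0" "G i j = 0" "G j i = 0" using zr k j by auto
      then show ?thesis unfolding G'_def by simp
    qed
  qed
  have herm'': "hermf n (\<lambda>i j. G i j - u i * cnj (u j))"
    unfolding hermf_def
  proof (intro allI impI)
    fix i j assume i: "i < n" and j: "j < n"
    have "G' j i = cnj (G' i j)" using herm' i j unfolding hermf_def by blast
    moreover have "G j i - u j * cnj (u i) = G' j i" "G i j - u i * cnj (u j) = G' i j" using G'eq i j by auto
    ultimately show "G j i - u j * cnj (u i) = cnj (G i j - u i * cnj (u j))" by simp
  qed
  have psd'': "psdf n (\<lambda>i j. G i j - u i * cnj (u j))"
    using psd' Qf_cong[of n "\<lambda>i j. G i j - u i * cnj (u j)" G'] G'eq unfolding psdf_def by simp
  have zr'': "\<forall>i<Suc k. \<forall>j<n. G i j - u i * cnj (u j) = 0 \<and> G j i - u j * cnj (u i) = 0"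
  proof (intro allI impI)
    fix i j assume i: "i < Suc k" and j: "j < n"
    then have i': "i < n" using k by simp
    have "G i j - u i * cnj (u j) = G' i j" "G j i - u j * cnj (u i) = G' j i"
      using G'eq[OF j] G'eq[OF i'] by auto
    then show "G i j - u i * cnj (u j) = 0 \<and> G j i - u j * cnj (u i) = 0" using zr' i j by simp
  qed
  show ?thesis
    using herm'' psd'' zr'' by blast
qed

lemma chol_ind:
  assumes h: "hermf n F" and p: "psdf n F"
  shows "k \<le> n \<Longrightarrow> \<exists>w. hermf n (\<lambda>i j. F i j - (\<Sum>l<k. w l i * cnj (w l j)))
     \<and> psdf n (\<lambda>i j. F i j - (\<Sum>l<k. w l i * cnj (w l j)))
     \<and> (\<forall>i<k. \<forall>j<n. F i j - (\<Sum>l<k. w l i * cnj (w l j)) = 0 \<and> F j i - (\<Sum>l<k. w l j * cnj (w l i)) = 0)"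
proof (induction k)
  case 0
  then show ?case using h p by simp
next
  case (Suc k)
  then obtain w where w: "hermf n (\<lambda>i j. F i j - (\<Sum>l<k. w l i * cnj (w l j)))"
     "psdf n (\<lambda>i j. F i j - (\<Sum>l<k. w l i * cnj (w l j)))"
     "\<forall>i<k. \<forall>j<n. F i j - (\<Sum>l<k. w l i * cnj (w l j)) = 0 \<and> F j i - (\<Sum>l<k. w l j * cnj (w l i)) = 0"
    by auto
  from elim_step[OF w(1) w(2) _ w(3)] Suc(2) obtain u where u:
    "hermf n (\<lambda>i j. F i j - (\<Sum>l<k. w l i * cnj (w l j)) - u i * cnj (u j))"
    "psdf n (\<lambda>i j. F i j - (\<Sum>l<k. w l i * cnj (w l j)) - u i * cnj (u j))"
    "\<forall>i<Suc k. \<forall>j<n. F i j - (\<Sum>l<k. w l i * cnj (w l j)) - u i * cnj (u j) = 0 \<and> F j i - (\<Sum>l<k. w l j * cnj (w l i)) - u j * cnj (u i) = 0"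
    by auto
  define w' where "w' = w(k := u)"
  have eq: "F i j - (\<Sum>l<Suc k. w' l i * cnj (w' l j)) = F i j - (\<Sum>l<k. w l i * cnj (w l j)) - u i * cnj (u j)" for i j
    unfolding w'_def by (simp add: lessThan_Suc algebra_simps)
  show ?case
    apply (rule exI[of _ w'])
    unfolding eq using u by (intro conjI) assumption+
qed

lemma chol:
  assumes h: "hermf n F" and p: "psdf n F"
  shows "\<exists>w. \<forall>i<n. \<forall>j<n. F i j = (\<Sum>l<n. w l i * cnj (w l j))"
  using chol_ind[OF h p, of n] by auto


lemma sum_split: "(\<Sum>i<a*b. g i) = (\<Sum>x<a. \<Sum>y<b. g (x*b+y :: nat))"
proof -
  have "(\<Sum>i<a*b. g i) = (\<Sum>x<a. sum g {x*b..<x*b+b})" by (rule sum.nat_group[symmetric])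
  also have "\<dots> = (\<Sum>x<a. \<Sum>y<b. g (x*b+y))"
  proof (rule sum.cong[OF refl])
    fix x
    show "sum g {x*b..<x*b+b} = (\<Sum>y<b. g (x*b+y))"
      using sum.shift_bounds_nat_ivl[where g=g and m=0 and k="x*b" and n=b]
      by (simp add: add.commute atLeast0LessThan)
  qed
  finally show ?thesis .
qed

lemma idx_less: assumes "x < a" "y < (b::nat)" shows "x*b+y < a*b"
proof -
  have "x*b + y < Suc x * b" using assms by simp
  also have "\<dots> \<le> a*b" using assms by (intro mult_le_mono1) simp
  finally show ?thesis .
qed

definition fE :: "nat \<Rightarrow> nat \<Rightarrow> (nat \<Rightarrow> complex) \<Rightarrow> real" where
  "fE dX dY f = ent (\<Sum>x<dX. qd dY f x) - (\<Sum>x<dX. ent (qd dY f x))"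

lemma qd_nonneg: "0 \<le> qd dY f x" by (simp add: qd_def sum_nonneg)

lemma qd_total: "(\<Sum>x<dX. qd dY f x) = (\<Sum>i<dX*dY. (cmod (f i))\<^sup>2)"
  by (simp add: qd_def sum_split)

lemma qd_scale: "qd dY (\<lambda>i. c * f i) x = (cmod c)\<^sup>2 * qd dY f x"
  by (simp add: qd_def norm_mult power_mult_distrib sum_distrib_left)

lemma fE_cong: assumes "\<And>i. i < dX*dY \<Longrightarrow> f i = g i" shows "fE dX dY f = fE dX dY g"
proof -
  have "qd dY f x = qd dY g x" if "x < dX" for x
    unfolding qd_def using assms idx_less[OF that] by (intro sum.cong refl) auto
  then show ?thesis unfolding fE_def by simp
qed

lemma term_eq:
  assumes psi: "(\<Sum>i<dX*dY. (cmod (\<psi> $ i))\<^sup>2) = 1" and c: "\<psi> \<in> carrier_vec (dX*dY)" and p: "0 \<le> p"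
  shows "p * vN_entropy (dephase dX dY (proj (dX*dY) \<psi>)) = fE dX dY (\<lambda>i. of_real (sqrt p) * \<psi> $ i)"
proof -
  let ?q = "qd dY (\<lambda>i. \<psi> $ i)"
  have tot: "(\<Sum>x<dX. ?q x) = 1" using qd_total[where dX=dX and dY=dY and f="\<lambda>i. \<psi> $ i"] psi by simp
  have sc: "qd dY (\<lambda>i. of_real (sqrt p) * \<psi> $ i) x = p * ?q x" for x
    using p by (simp add: qd_scale)
  have "fE dX dY (\<lambda>i. of_real (sqrt p) * \<psi> $ i) = ent (p * (\<Sum>x<dX. ?q x)) - (\<Sum>x<dX. ent (p * ?q x))"
    unfolding fE_def sc by (simp add: sum_distrib_left)
  also have "\<dots> = ent p - (\<Sum>x<dX. p * ent (?q x) + ?q x * ent p)"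
    using p qd_nonneg tot by (simp add: ent_mult)
  also have "\<dots> = ent p - p * (\<Sum>x<dX. ent (?q x)) - ent p * (\<Sum>x<dX. ?q x)"
    by (simp add: sum.distrib sum_distrib_left sum_distrib_right ac_simps)
  also have "\<dots> = p * vN_entropy (dephase dX dY (proj (dX*dY) \<psi>))"
    using tot vN_dephase[OF c] by simp
  finally show ?thesis by simp
qed

definition cset :: "nat \<Rightarrow> nat \<Rightarrow> complex mat \<Rightarrow> real set" where
  "cset dX dY \<rho> = {(\<Sum>k<m. p k * vN_entropy (dephase dX dY (proj (dX * dY) (\<psi> k)))) | m p \<psi>.
        pure_decomp (dX * dY) \<rho> m p \<psi>}"

lemma coh_cset: "coh_form dX dY \<rho> = Inf (cset dX dY \<rho>)"
  by (simp add: coh_form_def cset_def)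

lemma vN_nonneg:
  assumes psi: "(\<Sum>i<dX*dY. (cmod (\<psi> $ i))\<^sup>2) = 1" and c: "\<psi> \<in> carrier_vec (dX*dY)"
  shows "0 \<le> vN_entropy (dephase dX dY (proj (dX*dY) \<psi>))"
proof -
  let ?q = "qd dY (\<lambda>i. \<psi> $ i)"
  have tot: "(\<Sum>x<dX. ?q x) = 1" using qd_total[where dX=dX and dY=dY and f="\<lambda>i. \<psi> $ i"] psi by simp
  have "ent (?q x) \<le> 0" if "x < dX" for x
  proof (rule ent_nonpos)
    show "0 \<le> ?q x" by (rule qd_nonneg)
    have "?q x \<le> (\<Sum>x<dX. ?q x)" using that by (intro member_le_sum) (auto simp: qd_nonneg)
    then show "?q x \<le> 1" using tot by simp
  qed
  then have "(\<Sum>x<dX. ent (?q x)) \<le> 0" by (intro sum_nonpos) auto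
  then show ?thesis using vN_dephase[OF c] by simp
qed

lemma cset_nonneg: assumes "v \<in> cset dX dY \<rho>" shows "0 \<le> v"
proof -
  from assms obtain m p \<psi> where pd: "pure_decomp (dX * dY) \<rho> m p \<psi>"
    and v: "v = (\<Sum>k<m. p k * vN_entropy (dephase dX dY (proj (dX * dY) (\<psi> k))))"
    unfolding cset_def by blast
  have "0 \<le> p k * vN_entropy (dephase dX dY (proj (dX * dY) (\<psi> k)))" if "k < m" for k
    using pd that vN_nonneg[where dX=dX and dY=dY and \<psi>="\<psi> k"] unfolding pure_decomp_def by auto
  then show ?thesis unfolding v by (intro sum_nonneg) auto
qed

lemma cset_bdd: "bdd_below (cset dX dY \<rho>)"
  using cset_nonneg by (intro bdd_belowI[of _ 0]) auto


lemma fam_in_cset: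
  fixes w :: "'j \<Rightarrow> nat \<Rightarrow> complex"
  assumes dX: "0 < dX" and dY: "0 < dY" and fin: "finite J"
    and C: "\<sigma> \<in> carrier_mat (dX*dY) (dX*dY)"
    and E: "\<And>i j. i < dX*dY \<Longrightarrow> j < dX*dY \<Longrightarrow> \<sigma> $$ (i,j) = (\<Sum>t\<in>J. w t i * cnj (w t j))"
    and T: "(\<Sum>i<dX*dY. \<sigma> $$ (i,i)) = 1"
  shows "(\<Sum>t\<in>J. fE dX dY (w t)) \<in> cset dX dY \<sigma>"
proof -
  define N where "N = dX*dY"
  have N0: "0 < N" using dX dY by (simp add: N_def)
  obtain h where bij: "bij_betw h {0..<card J} J" using ex_bij_betw_nat_finite[OF fin] by blast
  define m where "m = card J"
  define P where "P t = (\<Sum>i<N. (cmod (w t i))\<^sup>2)" for t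
  define p where "p k = P (h k)" for k
  define \<psi> where "\<psi> k = (if P (h k) = 0 then unit_vec N 0 else vec N (\<lambda>i. w (h k) i / of_real (sqrt (P (h k)))))" for k
  have reidx: "(\<Sum>k<m. g (h k)) = (\<Sum>t\<in>J. g t)" for g :: "'j \<Rightarrow> 'b::comm_monoid_add"
    unfolding m_def lessThan_atLeast0 using sum.reindex_bij_betw[OF bij] by blast
  have diag: "\<sigma> $$ (i,i) = of_real (\<Sum>t\<in>J. (cmod (w t i))\<^sup>2)" if "i < N" for i
  proof -
    have "of_real (\<Sum>t\<in>J. (cmod (w t i))\<^sup>2) = (\<Sum>t\<in>J. w t i * cnj (w t i))"
      unfolding of_real_sum complex_norm_square by simp
    then show ?thesis using E[of i i] that unfolding N_def by simp
  qed
  have "(\<Sum>i<N. \<sigma> $$ (i,i)) = of_real (\<Sum>i<N. \<Sum>t\<in>J. (cmod (w t i))\<^sup>2)"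
    using diag by simp
  then have "complex_of_real (\<Sum>i<N. \<Sum>t\<in>J. (cmod (w t i))\<^sup>2) = 1" using T unfolding N_def by simp
  then have "(\<Sum>i<N. \<Sum>t\<in>J. (cmod (w t i))\<^sup>2) = 1" by (simp only: of_real_eq_1_iff)
  then have tot: "(\<Sum>t\<in>J. P t) = 1" unfolding P_def by (subst sum.swap) simp
  have P0: "0 \<le> P t" for t unfolding P_def by (simp add: sum_nonneg)
  have Pz: "w t i = 0" if "P t = 0" "i < N" for t i
  proof -
    have "\<forall>i\<in>{..<N}. (cmod (w t i))\<^sup>2 = 0" using that(1) unfolding P_def
      by (subst sum_nonneg_eq_0_iff[symmetric]) auto
    then show ?thesis using that(2) by simp
  qed
  have sq: "complex_of_real (sqrt (P t)) * complex_of_real (sqrt (P t)) = complex_of_real (P t)" for t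
  proof -
    have "sqrt (P t) * sqrt (P t) = P t" using P0[of t] by simp
    then show ?thesis by (simp add: of_real_mult[symmetric] del: of_real_mult)
  qed
  have key: "complex_of_real (p k) * (\<psi> k $ i * cnj (\<psi> k $ j)) = w (h k) i * cnj (w (h k) j)"
    if "i < N" "j < N" for k i j
  proof (cases "P (h k) = 0")
    case True then show ?thesis using Pz[OF True] that by (simp add: p_def)
  next
    case False
    let ?s = "complex_of_real (sqrt (P (h k)))"
    have s0: "?s \<noteq> 0" using False P0[of "h k"] by simp
    have "complex_of_real (p k) * (\<psi> k $ i * cnj (\<psi> k $ j)) = ?s * ?s * (w (h k) i / ?s * (cnj (w (h k) j) / ?s))"
      using False that unfolding \<psi>_def p_def sq by simp
    also have "\<dots> = w (h k) i * cnj (w (h k) j)" using s0 by (simp add: field_simps)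
    finally show ?thesis .
  qed
  have scal: "complex_of_real (sqrt (p k)) * \<psi> k $ i = w (h k) i" if "i < N" for k i
  proof (cases "P (h k) = 0")
    case True then show ?thesis using Pz[OF True] that by (simp add: p_def)
  next
    case False
    have s0: "complex_of_real (sqrt (P (h k))) \<noteq> 0" using False P0[of "h k"] by simp
    then show ?thesis using False that unfolding \<psi>_def p_def by simp
  qed
  have norm: "(\<Sum>i<N. (cmod (\<psi> k $ i))\<^sup>2) = 1" for k
  proof (cases "P (h k) = 0")
    case True
    have "(\<Sum>i<N. (cmod (\<psi> k $ i))\<^sup>2) = (\<Sum>i<N. if i = 0 then 1 else 0)"
      using True by (intro sum.cong refl) (simp add: \<psi>_def unit_vec_def)
    also have "\<dots> = 1" using N0 by simp
    finally show ?thesis .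
  next
    case False
    have sp: "0 < sqrt (P (h k))" using False P0[of "h k"] by simp
    have "(\<Sum>i<N. (cmod (\<psi> k $ i))\<^sup>2) = (\<Sum>i<N. (cmod (w (h k) i))\<^sup>2 / P (h k))"
      using False P0[of "h k"] by (intro sum.cong refl) (simp add: \<psi>_def norm_divide power_divide)
    also have "\<dots> = P (h k) / P (h k)" unfolding P_def by (rule sum_divide_distrib[symmetric])
    also have "\<dots> = 1" using False by simp
    finally show ?thesis .
  qed
  have carr: "\<psi> k \<in> carrier_vec N" for k unfolding \<psi>_def by simp
  have pd: "pure_decomp (dX*dY) \<sigma> m p \<psi>"
    unfolding pure_decomp_def N_def[symmetric]
  proof (intro conjI allI impI)
    show "(\<Sum>k<m. p k) = 1" using reidx[of P] tot unfolding p_def by simp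
    show "\<sigma> = mat N N (\<lambda>(i, j). \<Sum>k<m. complex_of_real (p k) * (\<psi> k $ i * cnj (\<psi> k $ j)))"
    proof (rule eq_matI)
      fix i j assume i: "i < dim_row (mat N N (\<lambda>(i, j). \<Sum>k<m. complex_of_real (p k) * (\<psi> k $ i * cnj (\<psi> k $ j))))"
        and j: "j < dim_col (mat N N (\<lambda>(i, j). \<Sum>k<m. complex_of_real (p k) * (\<psi> k $ i * cnj (\<psi> k $ j))))"
      then have i': "i < N" and j': "j < N" by auto
      have "(\<Sum>k<m. complex_of_real (p k) * (\<psi> k $ i * cnj (\<psi> k $ j))) = (\<Sum>k<m. w (h k) i * cnj (w (h k) j))"
        using key[OF i' j'] by simp
      also have "\<dots> = (\<Sum>t\<in>J. w t i * cnj (w t j))" by (rule reidx)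
      finally show "\<sigma> $$ (i, j) = mat N N (\<lambda>(i, j). \<Sum>k<m. complex_of_real (p k) * (\<psi> k $ i * cnj (\<psi> k $ j))) $$ (i, j)"
        using E[of i j] i' j' unfolding N_def by simp
    qed (use C in \<open>auto simp: N_def\<close>)
  qed (auto simp: p_def P0 carr norm)
  have "(\<Sum>k<m. p k * vN_entropy (dephase dX dY (proj (dX * dY) (\<psi> k)))) = (\<Sum>k<m. fE dX dY (w (h k)))"
  proof (rule sum.cong[OF refl])
    fix k
    have "p k * vN_entropy (dephase dX dY (proj (dX * dY) (\<psi> k))) = fE dX dY (\<lambda>i. of_real (sqrt (p k)) * \<psi> k $ i)"
      using term_eq[where dX=dX and dY=dY and \<psi>="\<psi> k" and p="p k"] norm carr P0 unfolding N_def p_def by simp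
    also have "\<dots> = fE dX dY (w (h k))" using scal unfolding N_def by (intro fE_cong) auto
    finally show "p k * vN_entropy (dephase dX dY (proj (dX * dY) (\<psi> k))) = fE dX dY (w (h k))" .
  qed
  also have "\<dots> = (\<Sum>t\<in>J. fE dX dY (w t))" by (rule reidx)
  finally have val: "(\<Sum>k<m. p k * vN_entropy (dephase dX dY (proj (dX * dY) (\<psi> k)))) = (\<Sum>t\<in>J. fE dX dY (w t))" .
  show ?thesis unfolding cset_def
    apply (rule CollectI)
    apply (rule exI[of _ m], rule exI[of _ p], rule exI[of _ \<psi>])
    using pd val by simp
qed

lemma fam_ub:
  fixes w :: "'j \<Rightarrow> nat \<Rightarrow> complex"
  assumes "0 < dX" "0 < dY" "finite J"
    "\<sigma> \<in> carrier_mat (dX*dY) (dX*dY)"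
    "\<And>i j. i < dX*dY \<Longrightarrow> j < dX*dY \<Longrightarrow> \<sigma> $$ (i,j) = (\<Sum>t\<in>J. w t i * cnj (w t j))"
    "(\<Sum>i<dX*dY. \<sigma> $$ (i,i)) = 1"
  shows "coh_form dX dY \<sigma> \<le> (\<Sum>t\<in>J. fE dX dY (w t))"
  unfolding coh_cset by (rule cInf_lower[OF fam_in_cset[OF assms] cset_bdd])

lemma adj_idx:
  assumes "A \<in> carrier_mat n n" "i < n" "j < n"
  shows "mat_adjoint A $$ (i,j) = cnj (A $$ (j,i))"
  using assms unfolding mat_adjoint_def by (simp add: mat_of_rows_def cols_def)

lemma state_cset_ne:
  assumes dX: "0 < dX" and dY: "0 < dY" and st: "is_state (dX*dY) \<rho>"
  shows "cset dX dY \<rho> \<noteq> {}"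
proof -
  define N where "N = dX*dY"
  have C: "\<rho> \<in> carrier_mat N N" and adj: "mat_adjoint \<rho> = \<rho>"
    and ps: "\<And>v. v \<in> carrier_vec N \<Longrightarrow> 0 \<le> Re (conjugate v \<bullet> (\<rho> *\<^sub>v v))"
    and tr: "(\<Sum>i<N. \<rho> $$ (i, i)) = 1"
    using st unfolding is_state_def N_def by auto
  let ?F = "\<lambda>i j. \<rho> $$ (i,j)"
  have h: "hermf N ?F" unfolding hermf_def
  proof (intro allI impI)
    fix i j assume "i < N" "j < N"
    then show "\<rho> $$ (j,i) = cnj (\<rho> $$ (i,j))" using adj_idx[OF C, of j i] adj by simp
  qed
  have p: "psdf N ?F" unfolding psdf_def
  proof
    fix v :: "nat \<Rightarrow> complex"
    have "conjugate (vec N v) \<bullet> (\<rho> *\<^sub>v vec N v) = Qf N ?F v"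
      using C unfolding Qf_def
      by (simp add: scalar_prod_def lessThan_atLeast0 sum_distrib_left ac_simps)
    then show "0 \<le> Re (Qf N ?F v)" using ps[of "vec N v"] by simp
  qed
  from chol[OF h p] obtain w where w: "\<forall>i<N. \<forall>j<N. \<rho> $$ (i,j) = (\<Sum>l<N. w l i * cnj (w l j))" by blast
  have "(\<Sum>t\<in>{..<N}. fE dX dY (w t)) \<in> cset dX dY \<rho>"
    by (rule fam_in_cset[OF dX dY _ C[unfolded N_def]]) (use w tr in \<open>auto simp: N_def\<close>)
  then show ?thesis by blast
qed


lemma core_real:
  fixes c :: "nat \<Rightarrow> nat \<Rightarrow> nat \<Rightarrow> nat \<Rightarrow> real"
  assumes c0: "\<And>a1 a2 b1 b2. 0 \<le> c a1 a2 b1 b2"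
  shows "(\<Sum>a2<n2. \<Sum>b2<m2. ent (\<Sum>a1<n1. \<Sum>b1<m1. c a1 a2 b1 b2) - (\<Sum>a1<n1. ent (\<Sum>b1<m1. c a1 a2 b1 b2)))
       + (\<Sum>a1<n1. \<Sum>b1<m1. ent (\<Sum>a2<n2. \<Sum>b2<m2. c a1 a2 b1 b2) - (\<Sum>a2<n2. ent (\<Sum>b2<m2. c a1 a2 b1 b2)))
       \<le> ent (\<Sum>a1<n1. \<Sum>a2<n2. \<Sum>b1<m1. \<Sum>b2<m2. c a1 a2 b1 b2)
         - (\<Sum>a1<n1. \<Sum>a2<n2. ent (\<Sum>b1<m1. \<Sum>b2<m2. c a1 a2 b1 b2))"
proof -
  define J where "J = {..<n2} \<times> {..<m2}"
  define cc where "cc = (\<lambda>(a2,b2) a1. \<Sum>b1<m1. c a1 a2 b1 b2)"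
  have fJ: "finite J" unfolding J_def by simp
  have cc0: "0 \<le> cc j a" for j a unfolding cc_def by (cases j) (auto intro: sum_nonneg c0)
  from superadd[OF fJ finite_lessThan[of n1], of cc] cc0
  have s1: "(\<Sum>j\<in>J. ent (\<Sum>a<n1. cc j a) - (\<Sum>a<n1. ent (cc j a)))
         \<le> ent (\<Sum>j\<in>J. \<Sum>a<n1. cc j a) - (\<Sum>a<n1. ent (\<Sum>j\<in>J. cc j a))" by blast
  have cart: "(\<Sum>j\<in>J. g j) = (\<Sum>a2<n2. \<Sum>b2<m2. g (a2,b2))" for g :: "nat \<times> nat \<Rightarrow> real"
    unfolding J_def by (simp add: sum.cartesian_product)
  have L1: "(\<Sum>j\<in>J. ent (\<Sum>a<n1. cc j a) - (\<Sum>a<n1. ent (cc j a))) =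
     (\<Sum>a2<n2. \<Sum>b2<m2. ent (\<Sum>a1<n1. \<Sum>b1<m1. c a1 a2 b1 b2) - (\<Sum>a1<n1. ent (\<Sum>b1<m1. c a1 a2 b1 b2)))"
    unfolding cart by (simp add: cc_def)
  define M where "M a1 = (\<Sum>b1<m1. \<Sum>a2<n2. \<Sum>b2<m2. c a1 a2 b1 b2)" for a1
  have M1: "(\<Sum>j\<in>J. cc j a1) = M a1" for a1
  proof -
    have "(\<Sum>j\<in>J. cc j a1) = (\<Sum>a2<n2. \<Sum>b2<m2. \<Sum>b1<m1. c a1 a2 b1 b2)" unfolding cart by (simp add: cc_def)
    also have "\<dots> = (\<Sum>a2<n2. \<Sum>b1<m1. \<Sum>b2<m2. c a1 a2 b1 b2)"
      by (rule sum.cong[OF refl]) (rule sum.swap)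
    also have "\<dots> = M a1" unfolding M_def by (rule sum.swap)
    finally show ?thesis .
  qed
  define T where "T = (\<Sum>a1<n1. M a1)"
  have T1: "(\<Sum>j\<in>J. \<Sum>a<n1. cc j a) = T"
    unfolding T_def M1[symmetric] by (rule sum.swap)
  have s1': "(\<Sum>a2<n2. \<Sum>b2<m2. ent (\<Sum>a1<n1. \<Sum>b1<m1. c a1 a2 b1 b2) - (\<Sum>a1<n1. ent (\<Sum>b1<m1. c a1 a2 b1 b2)))
     \<le> ent T - (\<Sum>a1<n1. ent (M a1))"
    using s1 unfolding L1 T1 M1 .
  have s2: "(\<Sum>b1<m1. ent (\<Sum>a2<n2. \<Sum>b2<m2. c a1 a2 b1 b2) - (\<Sum>a2<n2. ent (\<Sum>b2<m2. c a1 a2 b1 b2)))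
     \<le> ent (M a1) - (\<Sum>a2<n2. ent (\<Sum>b1<m1. \<Sum>b2<m2. c a1 a2 b1 b2))" for a1
  proof -
    have "(\<Sum>b1<m1. ent (\<Sum>a2<n2. \<Sum>b2<m2. c a1 a2 b1 b2) - (\<Sum>a2<n2. ent (\<Sum>b2<m2. c a1 a2 b1 b2)))
       \<le> ent (\<Sum>b1<m1. \<Sum>a2<n2. \<Sum>b2<m2. c a1 a2 b1 b2) - (\<Sum>a2<n2. ent (\<Sum>b1<m1. \<Sum>b2<m2. c a1 a2 b1 b2))"
      using superadd[OF finite_lessThan[of m1] finite_lessThan[of n2], of "\<lambda>b1 a2. \<Sum>b2<m2. c a1 a2 b1 b2"]
      by (simp add: sum_nonneg c0)
    then show ?thesis unfolding M_def .
  qed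
  have s2': "(\<Sum>a1<n1. \<Sum>b1<m1. ent (\<Sum>a2<n2. \<Sum>b2<m2. c a1 a2 b1 b2) - (\<Sum>a2<n2. ent (\<Sum>b2<m2. c a1 a2 b1 b2)))
     \<le> (\<Sum>a1<n1. ent (M a1)) - (\<Sum>a1<n1. \<Sum>a2<n2. ent (\<Sum>b1<m1. \<Sum>b2<m2. c a1 a2 b1 b2))"
    using sum_mono[of "{..<n1}", OF s2] by (simp add: sum_subtractf)
  have TT: "T = (\<Sum>a1<n1. \<Sum>a2<n2. \<Sum>b1<m1. \<Sum>b2<m2. c a1 a2 b1 b2)"
    unfolding T_def M_def by (rule sum.cong[OF refl]) (rule sum.swap)
  show ?thesis using s1' s2' unfolding TT by linarith
qed

lemma fE_prod_alg:
  fixes q1 q2 :: "nat \<Rightarrow> real"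
  assumes "\<And>a. 0 \<le> q1 a" "\<And>a. 0 \<le> q2 a"
  shows "ent (\<Sum>a1<n1. \<Sum>a2<n2. q1 a1 * q2 a2) - (\<Sum>a1<n1. \<Sum>a2<n2. ent (q1 a1 * q2 a2))
    = (\<Sum>a<n2. q2 a) * (ent (\<Sum>a<n1. q1 a) - (\<Sum>a<n1. ent (q1 a)))
      + (\<Sum>a<n1. q1 a) * (ent (\<Sum>a<n2. q2 a) - (\<Sum>a<n2. ent (q2 a)))"
proof -
  have "(\<Sum>a1<n1. \<Sum>a2<n2. q1 a1 * q2 a2) = (\<Sum>a<n1. q1 a) * (\<Sum>a<n2. q2 a)"
    by (simp add: sum_product)
  moreover have "ent ((\<Sum>a<n1. q1 a) * (\<Sum>a<n2. q2 a)) = (\<Sum>a<n1. q1 a) * ent (\<Sum>a<n2. q2 a) + (\<Sum>a<n2. q2 a) * ent (\<Sum>a<n1. q1 a)"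
    using assms by (intro ent_mult) (auto intro: sum_nonneg)
  moreover have "(\<Sum>a1<n1. \<Sum>a2<n2. ent (q1 a1 * q2 a2)) = (\<Sum>a1<n1. \<Sum>a2<n2. q1 a1 * ent (q2 a2) + q2 a2 * ent (q1 a1))"
    using assms by (intro sum.cong refl) (simp add: ent_mult)
  moreover have "\<dots> = (\<Sum>a<n1. q1 a) * (\<Sum>a<n2. ent (q2 a)) + (\<Sum>a<n2. q2 a) * (\<Sum>a<n1. ent (q1 a))"
    by (simp add: sum.distrib sum_distrib_left sum_distrib_right sum.swap[of _ "{..<n1}"] ac_simps)
  ultimately show ?thesis by (simp add: algebra_simps)
qed


definition idx4 :: "nat \<Rightarrow> nat \<Rightarrow> nat \<Rightarrow> nat \<Rightarrow> nat \<Rightarrow> nat \<Rightarrow> nat \<Rightarrow> nat" where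
  "idx4 dA2 dB1 dB2 a1 a2 b1 b2 = (a1*dA2+a2)*(dB1*dB2) + (b1*dB2+b2)"

definition uvec :: "(nat \<Rightarrow> real) \<Rightarrow> (nat \<Rightarrow> complex vec) \<Rightarrow> nat \<Rightarrow> nat \<Rightarrow> complex" where
  "uvec p \<psi> k i = of_real (sqrt (p k)) * \<psi> k $ i"

lemma pd_entries:
  assumes "pure_decomp n \<sigma> m p \<psi>" "i < n" "j < n"
  shows "\<sigma> $$ (i,j) = (\<Sum>k<m. uvec p \<psi> k i * cnj (uvec p \<psi> k j))"
proof -
  have p0: "\<forall>k<m. 0 \<le> p k" using assms(1) unfolding pure_decomp_def by auto
  have "\<sigma> $$ (i,j) = (\<Sum>k<m. complex_of_real (p k) * (\<psi> k $ i * cnj (\<psi> k $ j)))"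
    using assms unfolding pure_decomp_def by auto
  also have "\<dots> = (\<Sum>k<m. uvec p \<psi> k i * cnj (uvec p \<psi> k j))"
  proof (rule sum.cong[OF refl])
    fix k assume "k \<in> {..<m}"
    then have "sqrt (p k) * sqrt (p k) = p k" using p0 by simp
    then have "complex_of_real (sqrt (p k)) * complex_of_real (sqrt (p k)) = complex_of_real (p k)"
      by (simp add: of_real_mult[symmetric] del: of_real_mult)
    then show "complex_of_real (p k) * (\<psi> k $ i * cnj (\<psi> k $ j)) = uvec p \<psi> k i * cnj (uvec p \<psi> k j)"
      unfolding uvec_def by (metis (no_types, lifting) complex_cnj_complex_of_real complex_cnj_mult mult.assoc mult.left_commute)
  qed
  finally show ?thesis .
qed

lemma pd_value:
  assumes "pure_decomp (dX*dY) \<sigma> m p \<psi>"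
  shows "(\<Sum>k<m. p k * vN_entropy (dephase dX dY (proj (dX * dY) (\<psi> k)))) = (\<Sum>k<m. fE dX dY (uvec p \<psi> k))"
proof (rule sum.cong[OF refl])
  fix k assume "k \<in> {..<m}"
  then show "p k * vN_entropy (dephase dX dY (proj (dX * dY) (\<psi> k))) = fE dX dY (uvec p \<psi> k)"
    using assms term_eq[where dX=dX and dY=dY and \<psi>="\<psi> k" and p="p k"] unfolding pure_decomp_def uvec_def
    by auto
qed

lemma pd_weight:
  assumes "pure_decomp (dX*dY) \<sigma> m p \<psi>" "k < m"
  shows "(\<Sum>x<dX. qd dY (uvec p \<psi> k) x) = p k"
proof -
  have p0: "0 \<le> p k" and n: "(\<Sum>i<dX*dY. (cmod (\<psi> k $ i))\<^sup>2) = 1" using assms unfolding pure_decomp_def by auto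
  have "(\<Sum>x<dX. qd dY (uvec p \<psi> k) x) = (\<Sum>x<dX. p k * qd dY (\<lambda>i. \<psi> k $ i) x)"
    unfolding uvec_def qd_scale using p0 by simp
  also have "\<dots> = p k" using n qd_total[where dX=dX and dY=dY and f="\<lambda>i. \<psi> k $ i"] by (simp add: sum_distrib_left[symmetric])
  finally show ?thesis .
qed

lemma pd_sum1: assumes "pure_decomp n \<sigma> m p \<psi>" shows "(\<Sum>k<m. p k) = 1"
  using assms unfolding pure_decomp_def by auto

lemma cset_obtain:
  assumes "v \<in> cset dX dY \<sigma>"
  obtains m p \<psi> where "pure_decomp (dX*dY) \<sigma> m p \<psi>" "v = (\<Sum>k<m. fE dX dY (uvec p \<psi> k))"
  using assms pd_value unfolding cset_def by blast

context
  fixes dA1 dA2 dB1 dB2 :: nat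
  assumes pos: "0 < dA1" "0 < dA2" "0 < dB1" "0 < dB2"
begin

abbreviation "ix \<equiv> idx4 dA2 dB1 dB2"

lemma dec:
  assumes "a2 < dA2" "b1 < dB1" "b2 < dB2"
  shows "(ix a1 a2 b1 b2 div (dB1*dB2)) div dA2 = a1" "(ix a1 a2 b1 b2 div (dB1*dB2)) mod dA2 = a2"
    "(ix a1 a2 b1 b2 mod (dB1*dB2)) div dB2 = b1" "(ix a1 a2 b1 b2 mod (dB1*dB2)) mod dB2 = b2"
proof -
  have y: "b1*dB2+b2 < dB1*dB2" using idx_less assms by blast
  have d: "ix a1 a2 b1 b2 div (dB1*dB2) = a1*dA2+a2" and m: "ix a1 a2 b1 b2 mod (dB1*dB2) = b1*dB2+b2"
    using y pos unfolding idx4_def by simp_all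
  show "(ix a1 a2 b1 b2 div (dB1*dB2)) div dA2 = a1" "(ix a1 a2 b1 b2 div (dB1*dB2)) mod dA2 = a2"
    "(ix a1 a2 b1 b2 mod (dB1*dB2)) div dB2 = b1" "(ix a1 a2 b1 b2 mod (dB1*dB2)) mod dB2 = b2"
    unfolding d m using assms by simp_all
qed

lemma ix_less:
  assumes "a1 < dA1" "a2 < dA2" "b1 < dB1" "b2 < dB2"
  shows "ix a1 a2 b1 b2 < (dA1*dA2)*(dB1*dB2)"
  unfolding idx4_def using assms by (intro idx_less) auto

lemma sum_quad:
  "(\<Sum>i<(dA1*dA2)*(dB1*dB2). g i) = (\<Sum>a1<dA1. \<Sum>a2<dA2. \<Sum>b1<dB1. \<Sum>b2<dB2. g (ix a1 a2 b1 b2))"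
  by (simp add: sum_split idx4_def)

lemma tensor_entry:
  assumes "a1 < dA1" "a2 < dA2" "b1 < dB1" "b2 < dB2" "a1' < dA1" "a2' < dA2" "b1' < dB1" "b2' < dB2"
  shows "tensor_reorder dA1 dB1 dA2 dB2 \<rho>1 \<rho>2 $$ (ix a1 a2 b1 b2, ix a1' a2' b1' b2')
     = \<rho>1 $$ (a1*dB1+b1, a1'*dB1+b1') * \<rho>2 $$ (a2*dB2+b2, a2'*dB2+b2')"
  using assms ix_less[of a1 a2 b1 b2] ix_less[of a1' a2' b1' b2'] dec[of a2 b1 b2 a1] dec[of a2' b1' b2' a1']
  unfolding tensor_reorder_def Let_def by simp

lemma tensor_carrier:
  "tensor_reorder dA1 dB1 dA2 dB2 \<rho>1 \<rho>2 \<in> carrier_mat ((dA1*dA2)*(dB1*dB2)) ((dA1*dA2)*(dB1*dB2))"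
  unfolding tensor_reorder_def Let_def by simp

lemma tensor_trace:
  "(\<Sum>i<(dA1*dA2)*(dB1*dB2). tensor_reorder dA1 dB1 dA2 dB2 \<rho>1 \<rho>2 $$ (i,i))
   = (\<Sum>r<dA1*dB1. \<rho>1 $$ (r,r)) * (\<Sum>s<dA2*dB2. \<rho>2 $$ (s,s))"
proof -
  have "(\<Sum>i<(dA1*dA2)*(dB1*dB2). tensor_reorder dA1 dB1 dA2 dB2 \<rho>1 \<rho>2 $$ (i,i))
    = (\<Sum>a1<dA1. \<Sum>a2<dA2. \<Sum>b1<dB1. \<Sum>b2<dB2. \<rho>1 $$ (a1*dB1+b1, a1*dB1+b1) * \<rho>2 $$ (a2*dB2+b2, a2*dB2+b2))"
    unfolding sum_quad by (intro sum.cong refl) (simp add: tensor_entry)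
  also have "\<dots> = (\<Sum>a1<dA1. \<Sum>b1<dB1. \<Sum>a2<dA2. \<Sum>b2<dB2. \<rho>1 $$ (a1*dB1+b1, a1*dB1+b1) * \<rho>2 $$ (a2*dB2+b2, a2*dB2+b2))"
    by (rule sum.cong[OF refl]) (rule sum.swap)
  also have "\<dots> = (\<Sum>a1<dA1. \<Sum>b1<dB1. \<rho>1 $$ (a1*dB1+b1, a1*dB1+b1) * (\<Sum>a2<dA2. \<Sum>b2<dB2. \<rho>2 $$ (a2*dB2+b2, a2*dB2+b2)))"
    by (intro sum.cong refl) (simp add: sum_distrib_left)
  also have "\<dots> = (\<Sum>a1<dA1. \<Sum>b1<dB1. \<rho>1 $$ (a1*dB1+b1, a1*dB1+b1)) * (\<Sum>a2<dA2. \<Sum>b2<dB2. \<rho>2 $$ (a2*dB2+b2, a2*dB2+b2))"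
    by (simp add: sum_distrib_right)
  also have "\<dots> = (\<Sum>r<dA1*dB1. \<rho>1 $$ (r,r)) * (\<Sum>s<dA2*dB2. \<rho>2 $$ (s,s))"
    by (simp add: sum_split)
  finally show ?thesis .
qed

end


lemma sum_prod_set: "(\<Sum>t\<in>A\<times>B. h t) = (\<Sum>x\<in>A. \<Sum>y\<in>B. h (x,y))"
  by (simp add: sum.cartesian_product)

context
  fixes dA1 dA2 dB1 dB2 :: nat
  assumes pos: "0 < dA1" "0 < dA2" "0 < dB1" "0 < dB2"
begin

lemma r1_bound:
  assumes "i < (dA1*dA2)*(dB1*dB2)"
  shows "(i div (dB1*dB2)) div dA2 * dB1 + (i mod (dB1*dB2)) div dB2 < dA1*dB1"
proof -
  have "i div (dB1*dB2) < dA1*dA2" using assms by (simp add: less_mult_imp_div_less)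
  then have a: "(i div (dB1*dB2)) div dA2 < dA1" by (simp add: less_mult_imp_div_less)
  have "i mod (dB1*dB2) < dB1*dB2" using pos by simp
  then have b: "(i mod (dB1*dB2)) div dB2 < dB1" by (simp add: less_mult_imp_div_less)
  show ?thesis using idx_less[OF a b] .
qed

lemma r2_bound:
  assumes "i < (dA1*dA2)*(dB1*dB2)"
  shows "(i div (dB1*dB2)) mod dA2 * dB2 + (i mod (dB1*dB2)) mod dB2 < dA2*dB2"
proof -
  have a: "(i div (dB1*dB2)) mod dA2 < dA2" using pos by simp
  have b: "(i mod (dB1*dB2)) mod dB2 < dB2" using pos by simp
  show ?thesis using idx_less[OF a b] .
qed

lemma prod_mem:
  assumes s1: "is_state (dA1*dB1) \<rho>1" and s2: "is_state (dA2*dB2) \<rho>2"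
    and v1: "v1 \<in> cset dA1 dB1 \<rho>1" and v2: "v2 \<in> cset dA2 dB2 \<rho>2"
  shows "v1 + v2 \<in> cset (dA1*dA2) (dB1*dB2) (tensor_reorder dA1 dB1 dA2 dB2 \<rho>1 \<rho>2)"
proof -
  obtain m1 p1 \<psi>1 where pd1: "pure_decomp (dA1*dB1) \<rho>1 m1 p1 \<psi>1"
    and v1e: "v1 = (\<Sum>k<m1. fE dA1 dB1 (uvec p1 \<psi>1 k))" using cset_obtain[OF v1] .
  obtain m2 p2 \<psi>2 where pd2: "pure_decomp (dA2*dB2) \<rho>2 m2 p2 \<psi>2"
    and v2e: "v2 = (\<Sum>k<m2. fE dA2 dB2 (uvec p2 \<psi>2 k))" using cset_obtain[OF v2] .
  let ?u1 = "uvec p1 \<psi>1" and ?u2 = "uvec p2 \<psi>2"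
  let ?\<rho> = "tensor_reorder dA1 dB1 dA2 dB2 \<rho>1 \<rho>2"
  define R1 where "R1 i = (i div (dB1*dB2)) div dA2 * dB1 + (i mod (dB1*dB2)) div dB2" for i
  define R2 where "R2 i = (i div (dB1*dB2)) mod dA2 * dB2 + (i mod (dB1*dB2)) mod dB2" for i
  define W where "W = (\<lambda>(k1,k2) i. ?u1 k1 (R1 i) * ?u2 k2 (R2 i))"
  define J where "J = {..<m1} \<times> {..<m2}"
  have E: "?\<rho> $$ (i,j) = (\<Sum>t\<in>J. W t i * cnj (W t j))"
    if i: "i < (dA1*dA2)*(dB1*dB2)" and j: "j < (dA1*dA2)*(dB1*dB2)" for i j
  proof -
    have "?\<rho> $$ (i,j) = \<rho>1 $$ (R1 i, R1 j) * \<rho>2 $$ (R2 i, R2 j)"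
      using i j unfolding tensor_reorder_def Let_def R1_def R2_def by simp
    also have "\<rho>1 $$ (R1 i, R1 j) = (\<Sum>k<m1. ?u1 k (R1 i) * cnj (?u1 k (R1 j)))"
      by (rule pd_entries[OF pd1]) (use r1_bound i j in \<open>auto simp: R1_def\<close>)
    also have "\<rho>2 $$ (R2 i, R2 j) = (\<Sum>k<m2. ?u2 k (R2 i) * cnj (?u2 k (R2 j)))"
      by (rule pd_entries[OF pd2]) (use r2_bound i j in \<open>auto simp: R2_def\<close>)
    also have "(\<Sum>k<m1. ?u1 k (R1 i) * cnj (?u1 k (R1 j))) * (\<Sum>k<m2. ?u2 k (R2 i) * cnj (?u2 k (R2 j)))
        = (\<Sum>t\<in>J. W t i * cnj (W t j))"
      unfolding J_def sum_prod_set W_def by (simp add: sum_product ac_simps)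
    finally show ?thesis .
  qed
  have tr1: "(\<Sum>r<dA1*dB1. \<rho>1 $$ (r,r)) = 1" using s1 unfolding is_state_def by auto
  have tr2: "(\<Sum>r<dA2*dB2. \<rho>2 $$ (r,r)) = 1" using s2 unfolding is_state_def by auto
  have T: "(\<Sum>i<(dA1*dA2)*(dB1*dB2). ?\<rho> $$ (i,i)) = 1"
    using tensor_trace[OF pos, of \<rho>1 \<rho>2] tr1 tr2 by simp
  have DX: "0 < dA1*dA2" and DY: "0 < dB1*dB2" using pos by auto
  have mem: "(\<Sum>t\<in>J. fE (dA1*dA2) (dB1*dB2) (W t)) \<in> cset (dA1*dA2) (dB1*dB2) ?\<rho>"
    by (rule fam_in_cset[OF DX DY _ tensor_carrier[OF pos] E T]) (simp add: J_def)
  have qdW: "qd (dB1*dB2) (W (k1,k2)) (a1*dA2+a2) = qd dB1 (?u1 k1) a1 * qd dB2 (?u2 k2) a2"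
    if a1: "a1 < dA1" and a2: "a2 < dA2" for k1 k2 a1 a2
  proof -
    have "qd (dB1*dB2) (W (k1,k2)) (a1*dA2+a2) = (\<Sum>b1<dB1. \<Sum>b2<dB2. (cmod (W (k1,k2) (idx4 dA2 dB1 dB2 a1 a2 b1 b2)))\<^sup>2)"
      unfolding qd_def sum_split by (simp add: idx4_def)
    also have "\<dots> = (\<Sum>b1<dB1. \<Sum>b2<dB2. (cmod (?u1 k1 (a1*dB1+b1)))\<^sup>2 * (cmod (?u2 k2 (a2*dB2+b2)))\<^sup>2)"
      by (intro sum.cong refl) (simp add: W_def R1_def R2_def dec[OF pos] a2 norm_mult power_mult_distrib)
    also have "\<dots> = qd dB1 (?u1 k1) a1 * qd dB2 (?u2 k2) a2"
      unfolding qd_def by (simp add: sum_product)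
    finally show ?thesis .
  qed
  have fW: "fE (dA1*dA2) (dB1*dB2) (W (k1,k2)) = p2 k2 * fE dA1 dB1 (?u1 k1) + p1 k1 * fE dA2 dB2 (?u2 k2)"
    if k1: "k1 < m1" and k2: "k2 < m2" for k1 k2
  proof -
    have "fE (dA1*dA2) (dB1*dB2) (W (k1,k2)) =
      ent (\<Sum>a1<dA1. \<Sum>a2<dA2. qd dB1 (?u1 k1) a1 * qd dB2 (?u2 k2) a2)
      - (\<Sum>a1<dA1. \<Sum>a2<dA2. ent (qd dB1 (?u1 k1) a1 * qd dB2 (?u2 k2) a2))"
      unfolding fE_def sum_split by (simp add: qdW)
    also have "\<dots> = p2 k2 * fE dA1 dB1 (?u1 k1) + p1 k1 * fE dA2 dB2 (?u2 k2)"
      unfolding fE_prod_alg[OF qd_nonneg qd_nonneg] fE_def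
        pd_weight[OF pd1 k1] pd_weight[OF pd2 k2] ..
    finally show ?thesis .
  qed
  have "(\<Sum>t\<in>J. fE (dA1*dA2) (dB1*dB2) (W t)) = (\<Sum>k1<m1. \<Sum>k2<m2. p2 k2 * fE dA1 dB1 (?u1 k1) + p1 k1 * fE dA2 dB2 (?u2 k2))"
    unfolding J_def sum_prod_set by (intro sum.cong refl) (simp add: fW)
  also have "\<dots> = (\<Sum>k1<m1. fE dA1 dB1 (?u1 k1) * (\<Sum>k2<m2. p2 k2) + p1 k1 * (\<Sum>k2<m2. fE dA2 dB2 (?u2 k2)))"
    by (simp add: sum.distrib sum_distrib_left sum_distrib_right ac_simps)
  also have "\<dots> = v1 + v2"
    unfolding pd_sum1[OF pd2] v1e v2e
    by (simp add: sum.distrib sum_distrib_right[symmetric] pd_sum1[OF pd1])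
  finally show ?thesis using mem by simp
qed

end


context
  fixes dA1 dA2 dB1 dB2 :: nat
  assumes pos: "0 < dA1" "0 < dA2" "0 < dB1" "0 < dB2"
begin

lemma lower:
  assumes s1: "is_state (dA1*dB1) \<rho>1" and s2: "is_state (dA2*dB2) \<rho>2"
    and v: "v \<in> cset (dA1*dA2) (dB1*dB2) (tensor_reorder dA1 dB1 dA2 dB2 \<rho>1 \<rho>2)"
  shows "coh_form dA1 dB1 \<rho>1 + coh_form dA2 dB2 \<rho>2 \<le> v"
proof -
  let ?\<rho> = "tensor_reorder dA1 dB1 dA2 dB2 \<rho>1 \<rho>2"
  let ?ix = "idx4 dA2 dB1 dB2"
  obtain m p \<psi> where pd: "pure_decomp ((dA1*dA2)*(dB1*dB2)) ?\<rho> m p \<psi>"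
    and ve: "v = (\<Sum>k<m. fE (dA1*dA2) (dB1*dB2) (uvec p \<psi> k))" using cset_obtain[OF v] .
  let ?u = "uvec p \<psi>"
  have E: "?\<rho> $$ (i,j) = (\<Sum>k<m. ?u k i * cnj (?u k j))"
    if "i < (dA1*dA2)*(dB1*dB2)" "j < (dA1*dA2)*(dB1*dB2)" for i j
    using pd_entries[OF pd that] .
  have C1: "\<rho>1 \<in> carrier_mat (dA1*dB1) (dA1*dB1)" and tr1: "(\<Sum>r<dA1*dB1. \<rho>1 $$ (r,r)) = 1"
    using s1 unfolding is_state_def by auto
  have C2: "\<rho>2 \<in> carrier_mat (dA2*dB2) (dA2*dB2)" and tr2: "(\<Sum>r<dA2*dB2. \<rho>2 $$ (r,r)) = 1"
    using s2 unfolding is_state_def by auto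
  have tr1': "(\<Sum>a1<dA1. \<Sum>b1<dB1. \<rho>1 $$ (a1*dB1+b1, a1*dB1+b1)) = 1" using tr1 by (simp add: sum_split)
  have tr2': "(\<Sum>a2<dA2. \<Sum>b2<dB2. \<rho>2 $$ (a2*dB2+b2, a2*dB2+b2)) = 1" using tr2 by (simp add: sum_split)
  define J1 where "J1 = {..<m} \<times> ({..<dA2} \<times> {..<dB2})"
  define S where "S = (\<lambda>(k,(a2,b2)) r. ?u k (?ix (r div dB1) a2 (r mod dB1) b2))"
  have E1: "\<rho>1 $$ (r,r') = (\<Sum>t\<in>J1. S t r * cnj (S t r'))"
    if r: "r < dA1*dB1" and r': "r' < dA1*dB1" for r r'
  proof -
    define a1 where "a1 = r div dB1" define b1 where "b1 = r mod dB1"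
    define a1' where "a1' = r' div dB1" define b1' where "b1' = r' mod dB1"
    have ab: "a1 < dA1" "b1 < dB1" "a1' < dA1" "b1' < dB1"
      using r r' pos unfolding a1_def b1_def a1'_def b1'_def by (auto simp: less_mult_imp_div_less)
    have rr: "r = a1*dB1+b1" "r' = a1'*dB1+b1'" unfolding a1_def b1_def a1'_def b1'_def by simp_all
    have "(\<Sum>t\<in>J1. S t r * cnj (S t r')) =
        (\<Sum>k<m. \<Sum>a2<dA2. \<Sum>b2<dB2. ?u k (?ix a1 a2 b1 b2) * cnj (?u k (?ix a1' a2 b1' b2)))"
      unfolding J1_def sum_prod_set S_def a1_def b1_def a1'_def b1'_def by simp
    also have "\<dots> = (\<Sum>a2<dA2. \<Sum>k<m. \<Sum>b2<dB2. ?u k (?ix a1 a2 b1 b2) * cnj (?u k (?ix a1' a2 b1' b2)))"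
      by (rule sum.swap)
    also have "\<dots> = (\<Sum>a2<dA2. \<Sum>b2<dB2. \<Sum>k<m. ?u k (?ix a1 a2 b1 b2) * cnj (?u k (?ix a1' a2 b1' b2)))"
      by (rule sum.cong[OF refl]) (rule sum.swap)
    also have "\<dots> = (\<Sum>a2<dA2. \<Sum>b2<dB2. ?\<rho> $$ (?ix a1 a2 b1 b2, ?ix a1' a2 b1' b2))"
      by (intro sum.cong refl) (use E ix_less[OF pos] ab in auto)
    also have "\<dots> = (\<Sum>a2<dA2. \<Sum>b2<dB2. \<rho>1 $$ (r, r') * \<rho>2 $$ (a2*dB2+b2, a2*dB2+b2))"
      by (intro sum.cong refl) (use tensor_entry[OF pos] ab rr in auto)
    also have "\<dots> = \<rho>1 $$ (r, r')" using tr2' by (simp add: sum_distrib_left[symmetric])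
    finally show ?thesis by simp
  qed
  have coh1: "coh_form dA1 dB1 \<rho>1 \<le> (\<Sum>t\<in>J1. fE dA1 dB1 (S t))"
    by (rule fam_ub[OF pos(1) pos(3) _ C1 E1 tr1]) (simp add: J1_def)
  define J2 where "J2 = {..<m} \<times> ({..<dA1} \<times> {..<dB1})"
  define T where "T = (\<lambda>(k,(a1,b1)) s. ?u k (?ix a1 (s div dB2) b1 (s mod dB2)))"
  have E2: "\<rho>2 $$ (s,s') = (\<Sum>t\<in>J2. T t s * cnj (T t s'))"
    if s: "s < dA2*dB2" and s': "s' < dA2*dB2" for s s'
  proof -
    define a2 where "a2 = s div dB2" define b2 where "b2 = s mod dB2"
    define a2' where "a2' = s' div dB2" define b2' where "b2' = s' mod dB2"
    have ab: "a2 < dA2" "b2 < dB2" "a2' < dA2" "b2' < dB2"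
      using s s' pos unfolding a2_def b2_def a2'_def b2'_def by (auto simp: less_mult_imp_div_less)
    have ss: "s = a2*dB2+b2" "s' = a2'*dB2+b2'" unfolding a2_def b2_def a2'_def b2'_def by simp_all
    have "(\<Sum>t\<in>J2. T t s * cnj (T t s')) =
        (\<Sum>k<m. \<Sum>a1<dA1. \<Sum>b1<dB1. ?u k (?ix a1 a2 b1 b2) * cnj (?u k (?ix a1 a2' b1 b2')))"
      unfolding J2_def sum_prod_set T_def a2_def b2_def a2'_def b2'_def by simp
    also have "\<dots> = (\<Sum>a1<dA1. \<Sum>k<m. \<Sum>b1<dB1. ?u k (?ix a1 a2 b1 b2) * cnj (?u k (?ix a1 a2' b1 b2')))"
      by (rule sum.swap)
    also have "\<dots> = (\<Sum>a1<dA1. \<Sum>b1<dB1. \<Sum>k<m. ?u k (?ix a1 a2 b1 b2) * cnj (?u k (?ix a1 a2' b1 b2')))"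
      by (rule sum.cong[OF refl]) (rule sum.swap)
    also have "\<dots> = (\<Sum>a1<dA1. \<Sum>b1<dB1. ?\<rho> $$ (?ix a1 a2 b1 b2, ?ix a1 a2' b1 b2'))"
      by (intro sum.cong refl) (use E ix_less[OF pos] ab in auto)
    also have "\<dots> = (\<Sum>a1<dA1. \<Sum>b1<dB1. \<rho>1 $$ (a1*dB1+b1, a1*dB1+b1) * \<rho>2 $$ (s, s'))"
      by (intro sum.cong refl) (use tensor_entry[OF pos] ab ss in auto)
    also have "\<dots> = \<rho>2 $$ (s, s')" using tr1' by (simp add: sum_distrib_right[symmetric])
    finally show ?thesis by simp
  qed
  have coh2: "coh_form dA2 dB2 \<rho>2 \<le> (\<Sum>t\<in>J2. fE dA2 dB2 (T t))"
    by (rule fam_ub[OF pos(2) pos(4) _ C2 E2 tr2]) (simp add: J2_def)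
  have K: "(\<Sum>a2<dA2. \<Sum>b2<dB2. fE dA1 dB1 (S (k,(a2,b2)))) + (\<Sum>a1<dA1. \<Sum>b1<dB1. fE dA2 dB2 (T (k,(a1,b1))))
      \<le> fE (dA1*dA2) (dB1*dB2) (?u k)" for k
  proof -
    define c where "c a1 a2 b1 b2 = (cmod (?u k (?ix a1 a2 b1 b2)))\<^sup>2" for a1 a2 b1 b2
    have c0: "0 \<le> c a1 a2 b1 b2" for a1 a2 b1 b2 unfolding c_def by simp
    have q1: "qd dB1 (S (k,(a2,b2))) a1 = (\<Sum>b1<dB1. c a1 a2 b1 b2)" for a1 a2 b2
      unfolding qd_def c_def S_def by (intro sum.cong refl) auto
    have q2: "qd dB2 (T (k,(a1,b1))) a2 = (\<Sum>b2<dB2. c a1 a2 b1 b2)" for a1 a2 b1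
      unfolding qd_def c_def T_def by (intro sum.cong refl) auto
    have q: "qd (dB1*dB2) (?u k) (a1*dA2+a2) = (\<Sum>b1<dB1. \<Sum>b2<dB2. c a1 a2 b1 b2)" for a1 a2
      unfolding qd_def c_def sum_split by (simp add: idx4_def)
    have f1: "fE dA1 dB1 (S (k,(a2,b2))) = ent (\<Sum>a1<dA1. \<Sum>b1<dB1. c a1 a2 b1 b2) - (\<Sum>a1<dA1. ent (\<Sum>b1<dB1. c a1 a2 b1 b2))" for a2 b2
      unfolding fE_def q1 ..
    have f2: "fE dA2 dB2 (T (k,(a1,b1))) = ent (\<Sum>a2<dA2. \<Sum>b2<dB2. c a1 a2 b1 b2) - (\<Sum>a2<dA2. ent (\<Sum>b2<dB2. c a1 a2 b1 b2))" for a1 b1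
      unfolding fE_def q2 ..
    have f: "fE (dA1*dA2) (dB1*dB2) (?u k) = ent (\<Sum>a1<dA1. \<Sum>a2<dA2. \<Sum>b1<dB1. \<Sum>b2<dB2. c a1 a2 b1 b2)
         - (\<Sum>a1<dA1. \<Sum>a2<dA2. ent (\<Sum>b1<dB1. \<Sum>b2<dB2. c a1 a2 b1 b2))"
      unfolding fE_def sum_split[of _ dA1 dA2] q ..
    show ?thesis unfolding f1 f2 f
      by (rule core_real[OF c0])
  qed
  have "coh_form dA1 dB1 \<rho>1 + coh_form dA2 dB2 \<rho>2 \<le> (\<Sum>t\<in>J1. fE dA1 dB1 (S t)) + (\<Sum>t\<in>J2. fE dA2 dB2 (T t))"
    using coh1 coh2 by simp
  also have "\<dots> = (\<Sum>k<m. (\<Sum>a2<dA2. \<Sum>b2<dB2. fE dA1 dB1 (S (k,(a2,b2)))) + (\<Sum>a1<dA1. \<Sum>b1<dB1. fE dA2 dB2 (T (k,(a1,b1)))))"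
    unfolding J1_def J2_def sum_prod_set sum.distrib ..
  also have "\<dots> \<le> (\<Sum>k<m. fE (dA1*dA2) (dB1*dB2) (?u k))"
    by (rule sum_mono) (rule K)
  finally show ?thesis unfolding ve .
qed

end


theorem proposition11:
  fixes dA1 dA2 dB1 dB2 :: nat and \<rho>1 \<rho>2 :: "complex mat"
  assumes "0 < dA1" "0 < dA2" "0 < dB1" "0 < dB2"
    and "is_state (dA1 * dB1) \<rho>1" and "is_state (dA2 * dB2) \<rho>2"
  shows "coh_form (dA1 * dA2) (dB1 * dB2) (tensor_reorder dA1 dB1 dA2 dB2 \<rho>1 \<rho>2)
         = coh_form dA1 dB1 \<rho>1 + coh_form dA2 dB2 \<rho>2"
proof -
  let ?\<rho> = "tensor_reorder dA1 dB1 dA2 dB2 \<rho>1 \<rho>2"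
  note pos = assms(1-4)
  have ne1: "cset dA1 dB1 \<rho>1 \<noteq> {}" by (rule state_cset_ne) (use assms in auto)
  have ne2: "cset dA2 dB2 \<rho>2 \<noteq> {}" by (rule state_cset_ne) (use assms in auto)
  obtain w1 where w1: "w1 \<in> cset dA1 dB1 \<rho>1" using ne1 by blast
  obtain w2 where w2: "w2 \<in> cset dA2 dB2 \<rho>2" using ne2 by blast
  have ne: "cset (dA1*dA2) (dB1*dB2) ?\<rho> \<noteq> {}"
    using prod_mem[OF pos assms(5,6) w1 w2] by blast
  have h1: "coh_form (dA1*dA2) (dB1*dB2) ?\<rho> - v2 \<le> v1"
    if v1: "v1 \<in> cset dA1 dB1 \<rho>1" and v2: "v2 \<in> cset dA2 dB2 \<rho>2" for v1 v2
    using cInf_lower[OF prod_mem[OF pos assms(5,6) v1 v2] cset_bdd]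
    unfolding coh_cset[of "dA1*dA2" "dB1*dB2" ?\<rho>] by simp
  have h2: "coh_form (dA1*dA2) (dB1*dB2) ?\<rho> - v2 \<le> coh_form dA1 dB1 \<rho>1"
    if v2: "v2 \<in> cset dA2 dB2 \<rho>2" for v2
    unfolding coh_cset[of dA1 dB1 \<rho>1] by (rule cInf_greatest[OF ne1]) (use h1 v2 in auto)
  have h3: "coh_form (dA1*dA2) (dB1*dB2) ?\<rho> - coh_form dA1 dB1 \<rho>1 \<le> coh_form dA2 dB2 \<rho>2"
    unfolding coh_cset[of dA2 dB2 \<rho>2]
  proof (rule cInf_greatest[OF ne2])
    fix v2 assume "v2 \<in> cset dA2 dB2 \<rho>2"
    from h2[OF this] show "coh_form (dA1*dA2) (dB1*dB2) ?\<rho> - coh_form dA1 dB1 \<rho>1 \<le> v2" by linarith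
  qed
  have ge: "coh_form dA1 dB1 \<rho>1 + coh_form dA2 dB2 \<rho>2 \<le> coh_form (dA1*dA2) (dB1*dB2) ?\<rho>"
    unfolding coh_cset[of "dA1*dA2" "dB1*dB2" ?\<rho>]
    by (rule cInf_greatest[OF ne]) (rule lower[OF pos assms(5,6)])
  show ?thesis using h3 ge by linarith
qed


end
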